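(* Let $s\geq 12$ and $n\geq \binom{s}{2}+s+1$ be integers. Then $$ex(n,\{K_{2,2},M_{s+1}\})=n+\binom{s}{2}-\left\lceil\frac{s}{2}\right\rceil.$$
   Context: All graphs are finite and simple. $ex(n,\mathscr{F})$ is the maximum number of edges of an $n$-vertex graph containing no member of the family $\mathscr{F}$ as a subgraph. $K_{2,2}$ is the complete bipartite graph with two parts of size $2$ (the 4-cycle), and $M_{s+1}$ is the matching of $s+1$ pairwise disjoint edges. *)

theory Defs
  imports Complex_Main
begin

definition is_graph :: "nat \<Rightarrow> nat set set \<Rightarrow> bool" where
  "is_graph n G \<longleftrightarrow> (\<forall>e\<in>G. e \<subseteq> {..<n} \<and> card e = 2)"

text \<open>H (given by its edge set, vertices = union of edges, no isolated vertices)
  is a subgraph of G: an injective vertex map sending edges of H to edges of G.\<close>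
definition subgraph_of :: "nat set set \<Rightarrow> nat set set \<Rightarrow> bool" where
  "subgraph_of H G \<longleftrightarrow> (\<exists>f. inj_on f (\<Union>H) \<and> (\<forall>e\<in>H. f ` e \<in> G))"

definition K22 :: "nat set set" where
  "K22 = {{0,2},{0,3},{1,2},{1,3}}"

definition matching_graph :: "nat \<Rightarrow> nat set set" where
  "matching_graph k = {{2*i, 2*i+1} | i. i < k}"

definition ex :: "nat \<Rightarrow> nat set set set \<Rightarrow> nat" where
  "ex n F = Max {card G | G. is_graph n G \<and> (\<forall>H\<in>F. \<not> subgraph_of H G)}"

end

theory Submission
  imports Defs
begin


lemma num_small_cases:
  fixes r m :: nat
  assumes "1 \<le> m" "m \<le> r" "r \<le> 11"
  shows "r * (2*m+1) \<le> 4 * ((r*(22-r)) div 2) * m \<and>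
     (r*(2*m+1))^2 * (8*m+1) \<le> (4 * ((r*(22-r)) div 2) * m - r*(2*m+1))^2"
proof -
  have "r = 1 \<or> r = 2 \<or> r = 3 \<or> r = 4 \<or> r = 5 \<or> r = 6 \<or> r = 7 \<or> r = 8 \<or> r = 9 \<or> r = 10 \<or> r = 11"
    using assms by presburger
  moreover have "m = 1 \<or> m = 2 \<or> m = 3 \<or> m = 4 \<or> m = 5 \<or> m = 6 \<or> m = 7 \<or> m = 8 \<or> m = 9 \<or> m = 10 \<or> m = 11"
    using assms by presburger
  ultimately show ?thesis using assms by (elim disjE; simp)
qed



lemma num_B_small:
  fixes m :: int
  assumes "1 \<le> m" "m \<le> 12"
  shows "((2*m+1)^2 * (8*m+1)) \<le> (22*m-3)^2"
proof -
  have "m = 1 \<or> m = 2 \<or> m = 3 \<or> m = 4 \<or> m = 5 \<or> m = 6 \<or> m = 7 \<or> m = 8 \<or> m = 9 \<or> m = 10 \<or> m = 11 \<or> m = 12"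
    using assms by presburger
  then show ?thesis by (elim disjE; simp)
qed

lemma num_B:
  fixes r m :: int
  assumes "12 \<le> r" "1 \<le> m" "m \<le> r"
  shows "0 \<le> 2*r*m - 2*m - 3 \<and> (2*m+1)^2 * (8*m+1) \<le> (2*r*m - 2*m - 3)^2"
proof (cases "m \<le> 12")
  case True
  have b: "22*m - 3 \<le> 2*r*m - 2*m - 3" using assms by (simp add: mult_right_mono)
  have p: "0 \<le> 22*m - 3" using assms by simp
  have "(2*m+1)^2 * (8*m+1) \<le> (22*m-3)^2" using num_B_small[of m] True assms by simp
  also have "\<dots> \<le> (2*r*m - 2*m - 3)^2" using b p by (simp add: power_mono)
  finally show ?thesis using b p by linarith
next
  case False
  have b: "2*m*m - 2*m - 3 \<le> 2*r*m - 2*m - 3" using assms by (simp add: mult_right_mono)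
  have mm: "12*m \<le> m*m" using False by (simp add: mult_right_mono)
  have p: "0 \<le> 2*m*m - 2*m - 3" using mm False by linarith
  have eq: "(2*m*m - 2*m - 3)^2 - (2*m+1)^2 * (8*m+1) = 4*(m*m)*((m-11)*(m+1)) + 8"
    by (simp add: algebra_simps power2_eq_square)
  have "0 \<le> 4*(m*m)*((m-11)*(m+1))" using False by simp
  then have "(2*m+1)^2 * (8*m+1) \<le> (2*m*m - 2*m - 3)^2" using eq by linarith
  also have "\<dots> \<le> (2*r*m - 2*m - 3)^2" using b p by (simp add: power_mono)
  finally show ?thesis using b p by linarith
qed

lemma num_big:
  fixes r m F :: int
  assumes "12 \<le> r" "1 \<le> m" "m \<le> r" "r^2 - 1 \<le> 2*F"
  shows "r*(2*m+1) \<le> 4*F*m \<and> (r*(2*m+1))^2 * (8*m+1) \<le> (4*F*m - r*(2*m+1))^2"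
proof -
  define B where "B = 2*r*m - 2*m - 3"
  have B: "0 \<le> B" "(2*m+1)^2 * (8*m+1) \<le> B^2" using num_B[OF assms(1-3)] B_def by auto
  have "2*(r^2-1)*m \<le> 2*(2*F)*m" using assms by (simp add: mult_right_mono)
  then have "2*(r^2-1)*m \<le> 4*F*m" by simp
  moreover have "r*B \<le> 2*(r^2-1)*m - r*(2*m+1)" using assms unfolding B_def
    by (simp add: algebra_simps power2_eq_square)
  ultimately have A: "r*B \<le> 4*F*m - r*(2*m+1)" by linarith
  have rB: "0 \<le> r*B" using B assms by simp
  have "(r*(2*m+1))^2 * (8*m+1) = r^2 * ((2*m+1)^2 * (8*m+1))" by (simp add: power_mult_distrib)
  also have "\<dots> \<le> r^2 * B^2" using B by (simp add: mult_left_mono)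
  also have "\<dots> = (r*B)^2" by (simp add: power_mult_distrib)
  also have "\<dots> \<le> (4*F*m - r*(2*m+1))^2" using A rB by (simp add: power_mono)
  finally show ?thesis using A rB by linarith
qed



lemma cs_int:
  fixes d :: "'a \<Rightarrow> int"
  assumes "finite A"
  shows "(\<Sum>i\<in>A. d i)^2 \<le> int (card A) * (\<Sum>i\<in>A. (d i)^2)"
proof -
  have "0 \<le> (\<Sum>i\<in>A. \<Sum>j\<in>A. (d i - d j)^2)" by (intro sum_nonneg) auto
  also have "\<dots> = (\<Sum>i\<in>A. \<Sum>j\<in>A. ((d i)^2 + (d j)^2 - 2*d i*d j))"
    by (simp add: power2_diff)
  also have "\<dots> = 2 * int (card A) * (\<Sum>i\<in>A. (d i)^2) - 2 * (\<Sum>i\<in>A. d i)^2"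
    by (simp add: sum_subtractf sum.distrib sum_distrib_left sum_distrib_right power2_eq_square
        algebra_simps)
  finally show ?thesis by simp
qed

definition nbr :: "'a set set \<Rightarrow> 'a \<Rightarrow> 'a set" where
  "nbr E a = {b. {a,b} \<in> E}"

definition graph_on :: "'a set \<Rightarrow> 'a set set \<Rightarrow> bool" where
  "graph_on V E \<longleftrightarrow> finite V \<and> (\<forall>e\<in>E. e \<subseteq> V \<and> card e = 2)"

definition c4free :: "'a set set \<Rightarrow> bool" where
  "c4free E \<longleftrightarrow> (\<forall>a b. a \<noteq> b \<longrightarrow> card (nbr E a \<inter> nbr E b) \<le> 1)"

lemma nbr_sym: "b \<in> nbr E a \<longleftrightarrow> a \<in> nbr E b"
  by (simp add: nbr_def insert_commute)

lemma graph_finite: "graph_on V E \<Longrightarrow> finite E"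
  unfolding graph_on_def by (meson Pow_iff finite_Pow_iff finite_subset subsetI)

lemma graph_nbr_sub: "graph_on V E \<Longrightarrow> nbr E a \<subseteq> V"
  unfolding graph_on_def nbr_def by auto

lemma graph_noloop: "graph_on V E \<Longrightarrow> a \<notin> nbr E a"
  unfolding graph_on_def nbr_def by force

lemma graph_edge: "graph_on V E \<Longrightarrow> e \<in> E \<Longrightarrow> \<exists>a b. a \<noteq> b \<and> e = {a,b} \<and> a \<in> V \<and> b \<in> V"
  unfolding graph_on_def by (metis card_2_iff insert_subset)

lemma pair_count:
  assumes G: "graph_on V E" and C: "c4free E" and S: "S \<subseteq> V" and T: "finite T"
  shows "(\<Sum>v\<in>T. card (nbr E v \<inter> S) choose 2) \<le> card S choose 2"
proof -
  have fS: "finite S" using G S unfolding graph_on_def by (meson finite_subset)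
  define Q where "Q v = {q. q \<subseteq> nbr E v \<inter> S \<and> card q = 2}" for v
  have cQ: "card (Q v) = card (nbr E v \<inter> S) choose 2" for v
    unfolding Q_def by (rule n_subsets) (use fS in auto)
  have fQ: "finite (Q v)" for v
    unfolding Q_def by (rule finite_subset[of _ "Pow S"]) (use fS in auto)
  have disj: "Q v \<inter> Q w = {}" if "v \<noteq> w" for v w
  proof (rule ccontr)
    assume "Q v \<inter> Q w \<noteq> {}"
    then obtain q where q: "q \<in> Q v" "q \<in> Q w" by blast
    have "card q = 2" using q(1) unfolding Q_def by simp
    then obtain a b where ab: "q = {a,b}" "a \<noteq> b" by (meson card_2_iff)
    have sub: "{v,w} \<subseteq> nbr E a \<inter> nbr E b" using q ab unfolding Q_def by (auto simp: nbr_sym)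
    have fin: "finite (nbr E a \<inter> nbr E b)" using G graph_nbr_sub
      by (metis finite_Int graph_on_def rev_finite_subset)
    have "card {v,w} \<le> card (nbr E a \<inter> nbr E b)" by (rule card_mono[OF fin sub])
    then have "2 \<le> card (nbr E a \<inter> nbr E b)" using that by simp
    with C ab show False unfolding c4free_def by fastforce
  qed
  have "(\<Sum>v\<in>T. card (nbr E v \<inter> S) choose 2) = (\<Sum>v\<in>T. card (Q v))" by (simp add: cQ)
  also have "\<dots> = card (\<Union>v\<in>T. Q v)"
    by (rule card_UN_disjoint[symmetric]) (use T fQ disj in auto)
  also have "\<dots> \<le> card {q. q \<subseteq> S \<and> card q = 2}"
    by (rule card_mono) (use fS in \<open>auto simp: Q_def\<close>)
  also have "\<dots> = card S choose 2" by (rule n_subsets[OF fS])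
  finally show ?thesis .
qed

lemma card_filter_sum: "finite A \<Longrightarrow> card {x\<in>A. P x} = (\<Sum>x\<in>A. if P x then 1 else 0)"
  by (simp add: sum.If_cases Int_def)

lemma nbr_card_edges:
  assumes G: "graph_on V E" and "S \<subseteq> V"
  shows "card (nbr E v \<inter> S) = card {e\<in>E. v \<in> e \<and> e - {v} \<subseteq> S}"
proof -
  have "bij_betw (\<lambda>b. {v,b}) (nbr E v \<inter> S) {e\<in>E. v \<in> e \<and> e - {v} \<subseteq> S}"
  proof (rule bij_betwI')
    fix x y assume "x \<in> nbr E v \<inter> S" "y \<in> nbr E v \<inter> S"
    then show "({v, x} = {v, y}) = (x = y)" using graph_noloop[OF G, of v]
      by (auto simp: doubleton_eq_iff)
  next
    fix x assume "x \<in> nbr E v \<inter> S"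
    then show "{v, x} \<in> {e \<in> E. v \<in> e \<and> e - {v} \<subseteq> S}" by (auto simp: nbr_def)
  next
    fix e assume e: "e \<in> {e \<in> E. v \<in> e \<and> e - {v} \<subseteq> S}"
    then obtain a b where ab: "a \<noteq> b" "e = {a,b}" using graph_edge[OF G] by blast
    show "\<exists>x\<in>nbr E v \<inter> S. e = {v, x}"
    proof (cases "a = v")
      case True then show ?thesis using e ab by (auto simp: nbr_def)
    next
      case False then have "b = v" using e ab by auto
      then show ?thesis using e ab False by (auto simp: nbr_def insert_commute)
    qed
  qed
  then show ?thesis by (rule bij_betw_same_card)
qed

lemma handshake_in:
  assumes G: "graph_on V E" and S: "S \<subseteq> V"
  shows "(\<Sum>v\<in>S. card (nbr E v \<inter> S)) = 2 * card {e\<in>E. e \<subseteq> S}"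
proof -
  have fS: "finite S" using G S unfolding graph_on_def by (meson finite_subset)
  have fE: "finite E" using graph_finite[OF G] .
  let ?ES = "{e\<in>E. e \<subseteq> S}"
  have fES: "finite ?ES" using fE by simp
  have "(\<Sum>v\<in>S. card (nbr E v \<inter> S)) = (\<Sum>v\<in>S. card {e\<in>?ES. v \<in> e})"
  proof (rule sum.cong[OF refl])
    fix v assume v: "v \<in> S"
    have "card (nbr E v \<inter> S) = card {e\<in>E. v \<in> e \<and> e - {v} \<subseteq> S}" by (rule nbr_card_edges[OF G S])
    also have "{e\<in>E. v \<in> e \<and> e - {v} \<subseteq> S} = {e\<in>?ES. v \<in> e}" using v by auto
    finally show "card (nbr E v \<inter> S) = card {e\<in>?ES. v \<in> e}" .
  qed
  also have "\<dots> = (\<Sum>v\<in>S. \<Sum>e\<in>?ES. if v \<in> e then 1 else 0)"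
    by (intro sum.cong refl card_filter_sum[OF fES])
  also have "\<dots> = (\<Sum>e\<in>?ES. \<Sum>v\<in>S. if v \<in> e then 1 else 0)" by (rule sum.swap)
  also have "\<dots> = (\<Sum>e\<in>?ES. 2)"
  proof (rule sum.cong[OF refl])
    fix e assume e: "e \<in> ?ES"
    have "(\<Sum>v\<in>S. if v \<in> e then 1 else 0) = card {v\<in>S. v \<in> e}" by (simp add: card_filter_sum[OF fS])
    also have "{v\<in>S. v \<in> e} = e" using e by auto
    also have "card e = 2" using e G unfolding graph_on_def by auto
    finally show "(\<Sum>v\<in>S. if v \<in> e then 1 else 0) = (2::nat)" .
  qed
  finally show ?thesis by simp
qed

lemma handshake_cross:
  assumes G: "graph_on V E" and S: "S \<subseteq> V" and T: "T \<subseteq> V" and D: "S \<inter> T = {}"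
  shows "(\<Sum>v\<in>T. card (nbr E v \<inter> S)) = card {e\<in>E. e \<inter> S \<noteq> {} \<and> e \<inter> T \<noteq> {}}"
proof -
  have fT: "finite T" using G T unfolding graph_on_def by (meson finite_subset)
  have fE: "finite E" using graph_finite[OF G] .
  let ?EC = "{e\<in>E. e \<inter> S \<noteq> {} \<and> e \<inter> T \<noteq> {}}"
  have fEC: "finite ?EC" using fE by simp
  have "(\<Sum>v\<in>T. card (nbr E v \<inter> S)) = (\<Sum>v\<in>T. card {e\<in>?EC. v \<in> e})"
  proof (rule sum.cong[OF refl])
    fix v assume v: "v \<in> T"
    have "card (nbr E v \<inter> S) = card {e\<in>E. v \<in> e \<and> e - {v} \<subseteq> S}" by (rule nbr_card_edges[OF G S])
    also have "{e\<in>E. v \<in> e \<and> e - {v} \<subseteq> S} = {e\<in>?EC. v \<in> e}"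
    proof (intro set_eqI iffI)
      fix e assume e: "e \<in> {e\<in>E. v \<in> e \<and> e - {v} \<subseteq> S}"
      then obtain a b where ab: "a \<noteq> b" "e = {a,b}" using graph_edge[OF G] by blast
      then show "e \<in> {e\<in>?EC. v \<in> e}" using e v by auto
    next
      fix e assume e: "e \<in> {e\<in>?EC. v \<in> e}"
      then obtain a b where ab: "a \<noteq> b" "e = {a,b}" using graph_edge[OF G] by blast
      then show "e \<in> {e\<in>E. v \<in> e \<and> e - {v} \<subseteq> S}" using e v D by auto
    qed
    finally show "card (nbr E v \<inter> S) = card {e\<in>?EC. v \<in> e}" .
  qed
  also have "\<dots> = (\<Sum>v\<in>T. \<Sum>e\<in>?EC. if v \<in> e then 1 else 0)"
    by (intro sum.cong refl card_filter_sum[OF fEC])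
  also have "\<dots> = (\<Sum>e\<in>?EC. \<Sum>v\<in>T. if v \<in> e then 1 else 0)" by (rule sum.swap)
  also have "\<dots> = (\<Sum>e\<in>?EC. 1)"
  proof (rule sum.cong[OF refl])
    fix e assume e: "e \<in> ?EC"
    then obtain a b where ab: "a \<noteq> b" "e = {a,b}" using graph_edge[OF G] by blast
    have "(\<Sum>v\<in>T. if v \<in> e then 1 else 0) = card {v\<in>T. v \<in> e}" by (simp add: card_filter_sum[OF fT])
    also have "card {v\<in>T. v \<in> e} = 1"
    proof -
      have "{v\<in>T. v \<in> e} = {a} \<or> {v\<in>T. v \<in> e} = {b}" using e ab D by auto
      then show ?thesis by auto
    qed
    finally show "(\<Sum>v\<in>T. if v \<in> e then 1 else 0) = (1::nat)" .
  qed
  finally show ?thesis by simp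
qed

lemma kst:
  assumes G: "graph_on V E" and C: "c4free E" and P: "P \<subseteq> V"
  shows "4 * int (card {e\<in>E. e \<subseteq> P})^2 - 2 * int (card {e\<in>E. e \<subseteq> P}) * int (card P)
           \<le> int (card P)^2 * (int (card P) - 1)"
proof -
  have fP: "finite P" using G P unfolding graph_on_def by (meson finite_subset)
  define d where "d v = card (nbr E v \<inter> P)" for v
  define e where "e = card {e\<in>E. e \<subseteq> P}"
  define c where "c = card P"
  have h: "(\<Sum>v\<in>P. d v) = 2 * e" unfolding d_def e_def by (rule handshake_in[OF G P])
  have pc: "(\<Sum>v\<in>P. d v choose 2) \<le> c choose 2" unfolding d_def c_def by (rule pair_count[OF G C P fP])
  have two: "2 * int (k choose 2) = int k * (int k - 1)" for k :: nat
  proof -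
    have "even (k * (k - 1))" by (cases "even k") auto
    then have "2 * (k choose 2) = k * (k - 1)" by (simp add: choose_two)
    then have "int (2 * (k choose 2)) = int (k * (k - 1))" by simp
    then show ?thesis by (cases k) (auto simp: algebra_simps)
  qed
  have "(\<Sum>v\<in>P. (int (d v))^2) = (\<Sum>v\<in>P. 2 * int (d v choose 2) + int (d v))"
    by (rule sum.cong[OF refl]) (simp add: two power2_eq_square algebra_simps)
  also have "\<dots> = 2 * (\<Sum>v\<in>P. int (d v choose 2)) + (\<Sum>v\<in>P. int (d v))"
    by (simp add: sum.distrib sum_distrib_left)
  also have "\<dots> \<le> 2 * int (c choose 2) + 2 * int e"
  proof -
    have a: "(\<Sum>v\<in>P. int (d v choose 2)) \<le> int (c choose 2)"
      by (metis (mono_tags) of_nat_le_iff of_nat_sum pc)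
    have b: "(\<Sum>v\<in>P. int (d v)) = 2 * int e" by (metis h of_nat_mult of_nat_numeral of_nat_sum)
    show ?thesis using a b by linarith
  qed
  also have "\<dots> = int c * (int c - 1) + 2 * int e" by (simp add: two)
  finally have sq: "(\<Sum>v\<in>P. (int (d v))^2) \<le> int c * (int c - 1) + 2 * int e" .
  have "(2 * int e)^2 = (\<Sum>v\<in>P. int (d v))^2" using h by (metis of_nat_mult of_nat_numeral of_nat_sum)
  also have "\<dots> \<le> int c * (\<Sum>v\<in>P. (int (d v))^2)" unfolding c_def by (rule cs_int[OF fP])
  also have "\<dots> \<le> int c * (int c * (int c - 1) + 2 * int e)" using sq by (simp add: mult_left_mono)
  finally have "(2 * int e)^2 \<le> int c * (int c * (int c - 1) + 2 * int e)" .
  moreover have "(2 * int e)^2 = 4 * int e^2" by (simp add: power2_eq_square)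
  moreover have "int c * (int c * (int c - 1) + 2 * int e) = int c^2 * (int c - 1) + 2 * int e * int c"
    by (simp add: power2_eq_square algebra_simps)
  ultimately show ?thesis unfolding e_def[symmetric] c_def[symmetric] by linarith
qed



definition matching :: "'a set set \<Rightarrow> bool" where
  "matching M \<longleftrightarrow> (\<forall>e\<in>M. \<forall>e'\<in>M. e \<noteq> e' \<longrightarrow> e \<inter> e' = {})"

definition maxm :: "'a set set \<Rightarrow> 'a set set \<Rightarrow> bool" where
  "maxm E M \<longleftrightarrow> M \<subseteq> E \<and> matching M \<and> (\<forall>M'. M' \<subseteq> E \<longrightarrow> matching M' \<longrightarrow> card M' \<le> card M)"

lemma matching_insert:
  "matching (insert e A) \<longleftrightarrow> matching A \<and> (\<forall>g\<in>A. g \<noteq> e \<longrightarrow> e \<inter> g = {})"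
  unfolding matching_def by blast

lemma matching_subset: "matching A \<Longrightarrow> B \<subseteq> A \<Longrightarrow> matching B"
  unfolding matching_def by blast

lemma matching_unique: "matching M \<Longrightarrow> e \<in> M \<Longrightarrow> g \<in> M \<Longrightarrow> v \<in> e \<Longrightarrow> v \<in> g \<Longrightarrow> e = g"
  unfolding matching_def by blast

lemma maxm_exists:
  assumes "finite E" shows "\<exists>M. maxm E M"
proof -
  have "\<exists>M. (M \<subseteq> E \<and> matching M) \<and> (\<forall>M'. (M' \<subseteq> E \<and> matching M') \<longrightarrow> card M' \<le> card M)"
    apply (rule ex_has_greatest_nat[where k = "{}" and b = "card E + 1" and f = card])
    subgoal by (simp add: matching_def)
    subgoal using assms by (auto simp: less_Suc_eq_le intro: card_mono)
    done
  then show ?thesis unfolding maxm_def by blast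
qed

lemma card_Union_matching:
  assumes "matching M" "finite M" "\<forall>e\<in>M. card e = 2"
  shows "card (\<Union>M) = 2 * card M"
proof -
  have "card (\<Union>M) = sum card M"
  proof (rule card_Union_disjoint)
    show "pairwise disjnt M" using assms(1) by (auto simp: pairwise_def disjnt_def matching_def)
    show "finite A" if "A \<in> M" for A using assms(3) that by (metis card.infinite zero_neq_numeral)
  qed
  also have "\<dots> = sum (\<lambda>_. 2) M" using assms(3) by simp
  finally show ?thesis by simp
qed

definition sdiff :: "'a set \<Rightarrow> 'a set \<Rightarrow> 'a set" where
  "sdiff A B = (A - B) \<union> (B - A)"

lemma alt_path:
  assumes "finite M" "matching M" "matching N" "finite N"
    "\<forall>e\<in>M. card e = 2" "\<forall>e\<in>N. card e = 2" "x \<in> \<Union>M" "x \<notin> \<Union>N"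
  shows "\<exists>P. P \<subseteq> M \<union> N \<and> P \<inter> M \<inter> N = {} \<and> P \<inter> M \<noteq> {} \<and> matching (sdiff N P) \<and>
    (card (sdiff N P) = card N + 1 \<or>
     (card (sdiff N P) = card N \<and> (\<exists>y\<in>\<Union>N. \<Union>(sdiff N P) = insert x (\<Union>N - {y}))))"
  using assms
proof (induction "card M" arbitrary: M N x rule: less_induct)
  case less
  note fM = less.prems(1) and mM = less.prems(2) and mN = less.prems(3) and fN = less.prems(4)
    and cM = less.prems(5) and cN = less.prems(6) and xM = less.prems(7) and xN = less.prems(8)
  obtain e where e: "e \<in> M" "x \<in> e" using xM by blast
  obtain x' where x': "e = {x, x'}" "x \<noteq> x'"
    using cM e by (metis card_2_iff insert_commute insert_iff singletonD)
  have eN: "e \<notin> N" using xN e by blast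
  show ?case
  proof (cases "x' \<in> \<Union>N")
    case False
    have sd: "sdiff N {e} = insert e N" using eN by (auto simp: sdiff_def)
    have "matching (insert e N)" unfolding matching_insert using mN xN False x' by blast
    moreover have "card (insert e N) = card N + 1" using eN fN by simp
    ultimately show ?thesis using e eN by (intro exI[of _ "{e}"]) (auto simp: sd)
  next
    case True
    then obtain f where f: "f \<in> N" "x' \<in> f" by blast
    obtain y' where y': "f = {x', y'}" "x' \<noteq> y'"
      using cN f by (metis card_2_iff insert_commute insert_iff singletonD)
    have fe: "f \<noteq> e" using f eN by blast
    have y'x: "y' \<noteq> x" using xN f y' by blast
    have fM: "f \<notin> M"
    proof
      assume "f \<in> M"
      then have "f = e" using matching_unique[OF mM _ e(1), of f x'] f x' by blast
      then show False using fe by simp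
    qed
    have Nf: "\<And>g. g \<in> N \<Longrightarrow> g \<noteq> f \<Longrightarrow> x' \<notin> g \<and> y' \<notin> g"
      using matching_unique[OF mN] f y' by blast
    have Me: "\<And>g. g \<in> M \<Longrightarrow> g \<noteq> e \<Longrightarrow> x \<notin> g \<and> x' \<notin> g"
      using matching_unique[OF mM] e x' by blast
    have UNf: "\<Union>(N - {f}) = \<Union>N - {x', y'}"
    proof
      show "\<Union>(N - {f}) \<subseteq> \<Union>N - {x', y'}" using Nf by blast
      show "\<Union>N - {x', y'} \<subseteq> \<Union>(N - {f})" using y' by blast
    qed
    show ?thesis
    proof (cases "y' \<in> \<Union>M")
      case False
      have sd: "sdiff N {e, f} = insert e (N - {f})" using eN fe f by (auto simp: sdiff_def)
      have "matching (insert e (N - {f}))" unfolding matching_insert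
        using matching_subset[OF mN] Nf xN x' by blast
      moreover have "card (insert e (N - {f})) = card N"
      proof -
        have "card (insert e (N - {f})) = Suc (card (N - {f}))"
          by (rule card_insert_disjoint) (use fN eN in auto)
        also have "\<dots> = card N" by (rule card_Suc_Diff1[OF fN f(1)])
        finally show ?thesis .
      qed
      moreover have "\<Union>(insert e (N - {f})) = insert x (\<Union>N - {y'})"
        using UNf x' y' f True by auto
      moreover have "y' \<in> \<Union>N" using f y' by blast
      ultimately show ?thesis using e f fM eN
        by (intro exI[of _ "{e,f}"]) (auto simp: sd)
    next
      case True
      define M' where "M' = M - {e}"
      define N' where "N' = N - {f}"
      have lt: "card M' < card M" unfolding M'_def by (rule card_Diff1_less[OF less.prems(1) e(1)])
      have y'M': "y' \<in> \<Union>M'"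
      proof -
        obtain g where g: "g \<in> M" "y' \<in> g" using True by blast
        have "g \<noteq> e" using g y' x' y'x by auto
        then show ?thesis using g unfolding M'_def by blast
      qed
      have y'N': "y' \<notin> \<Union>N'" unfolding N'_def using Nf by blast
      have a1: "finite M'" "matching M'" "\<forall>e\<in>M'. card e = 2" unfolding M'_def
        using less.prems(1) matching_subset[OF mM, of "M - {e}"] cM by auto
      have a2: "finite N'" "matching N'" "\<forall>e\<in>N'. card e = 2" unfolding N'_def
        using fN matching_subset[OF mN, of "N - {f}"] cN by auto
      note ex = less.hyps[OF lt a1(1,2) a2(2,1) a1(3) a2(3) y'M' y'N']
      from ex obtain P' where P'c: "P' \<subseteq> M' \<union> N' \<and> P' \<inter> M' \<inter> N' = {} \<and> P' \<inter> M' \<noteq> {} \<and> matching (sdiff N' P') \<and>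
        (card (sdiff N' P') = card N' + 1 \<or>
         (card (sdiff N' P') = card N' \<and> (\<exists>y\<in>\<Union>N'. \<Union>(sdiff N' P') = insert y' (\<Union>N' - {y}))))"
        by (rule exE)
      note P' = P'c[THEN conjunct1] P'c[THEN conjunct2, THEN conjunct1]
        P'c[THEN conjunct2, THEN conjunct2, THEN conjunct1]
        P'c[THEN conjunct2, THEN conjunct2, THEN conjunct2, THEN conjunct1]
        P'c[THEN conjunct2, THEN conjunct2, THEN conjunct2, THEN conjunct2]
      define P where "P = insert e (insert f P')"
      have eP': "e \<notin> P'" using P'(1) eN unfolding M'_def N'_def by blast
      have fP': "f \<notin> P'" using P'(1) fM unfolding M'_def N'_def by blast
      have sd: "sdiff N P = insert e (sdiff N' P')"
        unfolding P_def N'_def sdiff_def using eN eP' fP' f fe by auto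
      have fin': "finite (sdiff N' P')"
      proof -
        have "sdiff N' P' \<subseteq> N \<union> M" using P'(1) unfolding sdiff_def M'_def N'_def by blast
        then show ?thesis using fN fM less.prems(1) by (meson finite_Un finite_subset)
      qed
      have enot: "e \<notin> sdiff N' P'" using eP' eN unfolding sdiff_def N'_def by blast
      have disj: "\<forall>g\<in>sdiff N' P'. g \<noteq> e \<longrightarrow> e \<inter> g = {}"
      proof (intro ballI impI)
        fix g assume g: "g \<in> sdiff N' P'" "g \<noteq> e"
        then have "g \<in> N' \<or> g \<in> M'" using P'(1) unfolding sdiff_def by blast
        then have "x \<notin> g \<and> x' \<notin> g"
        proof
          assume "g \<in> N'"
          then show ?thesis using Nf xN unfolding N'_def by blast
        next
          assume "g \<in> M'"
          then show ?thesis using Me unfolding M'_def by blast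
        qed
        then show "e \<inter> g = {}" using x' by blast
      qed
      have mat: "matching (sdiff N P)" unfolding sd matching_insert using P'(4) disj by blast
      have cardsd: "card (sdiff N P) = card (sdiff N' P') + 1" unfolding sd using fin' enot by simp
      have cardN: "card N = card N' + 1" unfolding N'_def using card_Suc_Diff1[OF fN f(1)] by simp
      have PMN: "P \<subseteq> M \<union> N" "P \<inter> M \<inter> N = {}" "P \<inter> M \<noteq> {}"
        using P'(1,2) e f eN fM unfolding P_def M'_def N'_def by blast+
      from P'(5) show ?thesis
      proof
        assume "card (sdiff N' P') = card N' + 1"
        then show ?thesis using PMN mat cardsd cardN by (intro exI[of _ P]) auto
      next
        assume "card (sdiff N' P') = card N' \<and> (\<exists>y\<in>\<Union>N'. \<Union>(sdiff N' P') = insert y' (\<Union>N' - {y}))"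
        then obtain y where y: "card (sdiff N' P') = card N'" "y \<in> \<Union>N'"
          "\<Union>(sdiff N' P') = insert y' (\<Union>N' - {y})" by blast
        have yN: "y \<in> \<Union>N" using y(2) unfolding N'_def by blast
        have yx': "y \<noteq> x'" "y \<noteq> y'" using y(2) Nf unfolding N'_def by blast+
        have UN: "\<Union>N = \<Union>N' \<union> {x', y'}" unfolding N'_def using f y' by blast
        have U: "\<Union>(sdiff N P) = insert x (\<Union>N - {y})"
          unfolding sd using y(3) UN x' yx' by auto
        have c2: "card (sdiff N P) = card N" using cardsd cardN y(1) by simp
        have "\<exists>y\<in>\<Union>N. \<Union>(sdiff N P) = insert x (\<Union>N - {y})" using U yN by blast
        then show ?thesis using PMN mat c2 by blast
      qed
    qed
  qed
qed



definition conn :: "'a set \<Rightarrow> 'a set set \<Rightarrow> bool" where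
  "conn V E \<longleftrightarrow> (\<forall>A. A \<subseteq> V \<longrightarrow> A \<noteq> {} \<longrightarrow> A \<noteq> V \<longrightarrow> (\<exists>e\<in>E. e \<inter> A \<noteq> {} \<and> e - A \<noteq> {}))"

lemma maxm_aug:
  assumes G: "graph_on V E" and M: "maxm E M" and e: "{a,b} \<in> E" and a: "a \<notin> \<Union>M" and b: "b \<notin> \<Union>M"
  shows False
proof -
  have fE: "finite E" using graph_finite[OF G] .
  have fM: "finite M" using M fE unfolding maxm_def by (meson finite_subset)
  have nin: "{a,b} \<notin> M" using a by blast
  have "matching (insert {a,b} M)" unfolding matching_insert using M a b unfolding maxm_def by blast
  moreover have "insert {a,b} M \<subseteq> E" using M e unfolding maxm_def by blast
  ultimately have "card (insert {a,b} M) \<le> card M" using M unfolding maxm_def by blast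
  then show False using nin fM by simp
qed

lemma conn_reach:
  assumes G: "graph_on V E" and C: "conn V E" and a: "a \<in> V" and b: "b \<in> V"
  shows "\<exists>k. ((\<lambda>x y. {x,y} \<in> E) ^^ k) a b"
proof -
  let ?adj = "\<lambda>x y. {x,y} \<in> E"
  define R where "R = {b\<in>V. \<exists>k. (?adj ^^ k) a b}"
  have aR: "a \<in> R" unfolding R_def using a relpowp_0_I[of ?adj a] by blast
  have "R = V"
  proof (rule ccontr)
    assume ne: "R \<noteq> V"
    have "R \<subseteq> V" unfolding R_def by blast
    then obtain e where e: "e \<in> E" "e \<inter> R \<noteq> {}" "e - R \<noteq> {}" using C ne aR unfolding conn_def by blast
    obtain p q where pq: "p \<noteq> q" "e = {p,q}" "p \<in> V" "q \<in> V" using graph_edge[OF G e(1)] by blast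
    have "\<exists>p' q'. {p',q'} \<in> E \<and> p' \<in> R \<and> q' \<notin> R \<and> q' \<in> V"
    proof -
      have "p \<in> R \<and> q \<notin> R \<or> q \<in> R \<and> p \<notin> R" using e pq by auto
      then show ?thesis
      proof
        assume "p \<in> R \<and> q \<notin> R" then show ?thesis using e(1) pq by blast
      next
        assume "q \<in> R \<and> p \<notin> R" then show ?thesis using e(1) pq by (metis insert_commute)
      qed
    qed
    then obtain p' q' where pq': "{p',q'} \<in> E" "p' \<in> R" "q' \<notin> R" "q' \<in> V" by blast
    then obtain k where "(?adj ^^ k) a p'" unfolding R_def by blast
    then have "(?adj ^^ Suc k) a q'" using pq'(1) by (rule relpowp_Suc_I)
    then have "q' \<in> R" unfolding R_def using pq'(4) by blast
    then show False using pq'(3) by blast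
  qed
  then show ?thesis using b unfolding R_def by blast
qed

lemma gallai:
  assumes G: "graph_on V E" and C: "conn V E"
    and miss: "\<forall>v\<in>V. \<exists>M. maxm E M \<and> v \<notin> \<Union>M"
    and M: "maxm E M"
  shows "card (V - \<Union>M) \<le> 1"
proof (rule ccontr)
  assume "\<not> card (V - \<Union>M) \<le> 1"
  let ?adj = "\<lambda>x y. {x,y} \<in> E"
  have fV: "finite V" using G unfolding graph_on_def by blast
  have fE: "finite E" using graph_finite[OF G] .
  have cE: "\<forall>e\<in>E. card e = 2" using G unfolding graph_on_def by blast
  have UsubV: "\<Union>N \<subseteq> V" if "N \<subseteq> E" for N using that G unfolding graph_on_def by blast
  have fin_sub: "finite N" if "N \<subseteq> E" for N using that fE by (meson finite_subset)
  define Bad where "Bad k \<longleftrightarrow> (\<exists>M u v. maxm E M \<and> u \<in> V \<and> v \<in> V \<and> u \<noteq> v \<and> u \<notin> \<Union>M \<and> v \<notin> \<Union>M \<and> (?adj ^^ k) u v)" for k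
  have "\<exists>k. Bad k"
  proof -
    obtain u v where uv: "u \<in> V - \<Union>M" "v \<in> V - \<Union>M" "u \<noteq> v"
      using \<open>\<not> card (V - \<Union>M) \<le> 1\<close> fV by (metis One_nat_def card_le_Suc0_iff_eq finite_Diff)
    obtain k where "(?adj ^^ k) u v" using conn_reach[OF G C, of u v] uv by blast
    then show ?thesis unfolding Bad_def using M uv by blast
  qed
  define k where "k = (LEAST k. Bad k)"
  have Bk: "Bad k" unfolding k_def by (rule LeastI_ex) fact
  have minBad: "\<not> Bad j" if "j < k" for j using not_less_Least[of j Bad] that unfolding k_def by blast
  obtain M1 u v where M1: "maxm E M1" and uv: "u \<in> V" "v \<in> V" "u \<noteq> v" "u \<notin> \<Union>M1" "v \<notin> \<Union>M1"
    and path: "(?adj ^^ k) u v" using Bk unfolding Bad_def by blast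
  have "k \<noteq> 0" using path uv(3) by (metis relpowp_0_E)
  then obtain j where kj: "k = Suc j" by (cases k) auto
  obtain w where uw: "{u,w} \<in> E" and wv: "(?adj ^^ j) w v" using path unfolding kj by (rule relpowp_Suc_E2)
  have wV: "w \<in> V" using uw G unfolding graph_on_def by blast
  have wv_ne: "w \<noteq> v"
  proof
    assume "w = v"
    then show False using maxm_aug[OF G M1 _ uv(4,5)] uw by simp
  qed
  define NN where "NN = {N. maxm E N \<and> w \<notin> \<Union>N}"
  obtain N0 where "N0 \<in> NN" using miss wV unfolding NN_def by blast
  have "\<exists>N. N \<in> NN \<and> (\<forall>N'. N' \<in> NN \<longrightarrow> card (N' \<inter> M1) \<le> card (N \<inter> M1))"
  proof (rule ex_has_greatest_nat[where k = N0 and b = "card M1 + 1" and f = "\<lambda>N. card (N \<inter> M1)"])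
    show "N0 \<in> NN" by fact
    show "\<forall>y. y \<in> NN \<longrightarrow> card (y \<inter> M1) < card M1 + 1"
    proof (intro allI impI)
      fix y assume "y \<in> NN"
      have "finite M1" using M1 fin_sub unfolding maxm_def by blast
      then have "card (y \<inter> M1) \<le> card M1" by (simp add: card_mono)
      then show "card (y \<inter> M1) < card M1 + 1" by simp
    qed
  qed
  then obtain N where N: "maxm E N" "w \<notin> \<Union>N" and Nbest: "\<And>N'. N' \<in> NN \<Longrightarrow> card (N' \<inter> M1) \<le> card (N \<inter> M1)"
    unfolding NN_def by blast
  have uN: "u \<in> \<Union>N"
  proof (rule ccontr)
    assume "u \<notin> \<Union>N"
    then show False using maxm_aug[OF G N(1) uw _ N(2)] by blast
  qed
  have vN: "v \<in> \<Union>N"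
  proof (rule ccontr)
    assume "v \<notin> \<Union>N"
    then have "Bad j" unfolding Bad_def using N wV uv(2) wv_ne wv by blast
    then show False using minBad kj by simp
  qed
  have NE: "N \<subseteq> E" "matching N" using N(1) unfolding maxm_def by auto
  have M1E: "M1 \<subseteq> E" "matching M1" using M1 unfolding maxm_def by auto
  have fN: "finite N" using fin_sub NE by blast
  have fM1: "finite M1" using fin_sub M1E by blast
  have cardeq: "card N = card M1" using N(1) M1 unfolding maxm_def by (meson le_antisym)
  define A where "A = V - \<Union>M1"
  define B where "B = V - \<Union>N"
  have cU1: "card (\<Union>M1) = 2 * card M1" using card_Union_matching[OF M1E(2) fM1] cE M1E by blast
  have cU2: "card (\<Union>N) = 2 * card N" using card_Union_matching[OF NE(2) fN] cE NE by blast
  have cA: "card A = card V - 2 * card M1" unfolding A_def using UsubV[OF M1E(1)] fV cU1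
    by (simp add: card_Diff_subset finite_subset)
  have cB: "card B = card V - 2 * card N" unfolding B_def using UsubV[OF NE(1)] fV cU2
    by (simp add: card_Diff_subset finite_subset)
  have cAB: "card A = card B" using cA cB cardeq by simp
  have fA: "finite A" "finite B" unfolding A_def B_def using fV by auto
  have "card (A - B) = card (B - A)"
  proof -
    have "card A = card (A \<inter> B) + card (A - B)" using fA(1) by (rule card_Int_Diff)
    moreover have "card B = card (B \<inter> A) + card (B - A)" using fA(2) by (rule card_Int_Diff)
    moreover have "B \<inter> A = A \<inter> B" by blast
    ultimately show ?thesis using cAB by simp
  qed
  moreover have uvAB: "{u,v} \<subseteq> A - B" using uv uN vN unfolding A_def B_def by blast
  moreover have "card {u,v} \<le> card (A - B)" by (rule card_mono) (use fA uvAB in auto)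
  ultimately have two: "2 \<le> card (B - A)" using uv(3) by simp
  have "B - A - {w} \<noteq> {}"
  proof
    assume "B - A - {w} = {}"
    then have "B - A \<subseteq> {w}" by blast
    then have "card (B - A) \<le> card {w}" by (rule card_mono[rotated]) simp
    then show False using two by simp
  qed
  then obtain x where x: "x \<in> B" "x \<notin> A" "x \<noteq> w" by blast
  have xM1: "x \<in> \<Union>M1" and xN: "x \<notin> \<Union>N" using x unfolding A_def B_def by auto
  have cM1: "\<forall>e\<in>M1. card e = 2" and cN: "\<forall>e\<in>N. card e = 2" using cE M1E NE by blast+
  from alt_path[OF fM1 M1E(2) NE(2) fN cM1 cN xM1 xN] obtain P where Pc:
    "P \<subseteq> M1 \<union> N \<and> P \<inter> M1 \<inter> N = {} \<and> P \<inter> M1 \<noteq> {} \<and> matching (sdiff N P) \<and>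
    (card (sdiff N P) = card N + 1 \<or>
     (card (sdiff N P) = card N \<and> (\<exists>y\<in>\<Union>N. \<Union>(sdiff N P) = insert x (\<Union>N - {y}))))"
    by (rule exE)
  note P = Pc[THEN conjunct1] Pc[THEN conjunct2, THEN conjunct1]
        Pc[THEN conjunct2, THEN conjunct2, THEN conjunct1]
        Pc[THEN conjunct2, THEN conjunct2, THEN conjunct2, THEN conjunct1]
        Pc[THEN conjunct2, THEN conjunct2, THEN conjunct2, THEN conjunct2]
  have sdE: "sdiff N P \<subseteq> E" using P(1) NE M1E unfolding sdiff_def by blast
  from P(5) show False
  proof
    assume "card (sdiff N P) = card N + 1"
    moreover have "card (sdiff N P) \<le> card N" using N(1) sdE P(4) unfolding maxm_def by blast
    ultimately show False by simp
  next
    assume "card (sdiff N P) = card N \<and> (\<exists>y\<in>\<Union>N. \<Union>(sdiff N P) = insert x (\<Union>N - {y}))"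
    then obtain y where c: "card (sdiff N P) = card N" and U: "\<Union>(sdiff N P) = insert x (\<Union>N - {y})" by blast
    have "maxm E (sdiff N P)" using N(1) sdE P(4) c unfolding maxm_def by auto
    moreover have "w \<notin> \<Union>(sdiff N P)" unfolding U using x(3) N(2) by blast
    ultimately have "sdiff N P \<in> NN" unfolding NN_def by blast
    then have le: "card (sdiff N P \<inter> M1) \<le> card (N \<inter> M1)" by (rule Nbest)
    have sub: "N \<inter> M1 \<subset> sdiff N P \<inter> M1"
    proof
      show "N \<inter> M1 \<subseteq> sdiff N P \<inter> M1" using P(2) unfolding sdiff_def by blast
      obtain g where g: "g \<in> P" "g \<in> M1" using P(3) by blast
      then have "g \<notin> N" using P(2) by blast
      then show "N \<inter> M1 \<noteq> sdiff N P \<inter> M1" using g unfolding sdiff_def by blast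
    qed
    have "finite (sdiff N P \<inter> M1)" using fM1 by simp
    then have "card (N \<inter> M1) < card (sdiff N P \<inter> M1)" using sub by (rule psubset_card_mono)
    then show False using le by simp
  qed
qed



definition good_struct :: "'a set \<Rightarrow> 'a set set \<Rightarrow> 'a set \<Rightarrow> 'a set set \<Rightarrow> 'a set set \<Rightarrow> bool" where
  "good_struct V E X Ps M \<longleftrightarrow> X \<subseteq> V \<and> finite Ps \<and> (\<forall>P\<in>Ps. P \<subseteq> V - X) \<and> \<Union>Ps = V - X \<and>
     (\<forall>P\<in>Ps. \<forall>Q\<in>Ps. P \<noteq> Q \<longrightarrow> P \<inter> Q = {}) \<and> (\<forall>e\<in>E. e \<inter> X = {} \<longrightarrow> (\<exists>P\<in>Ps. e \<subseteq> P)) \<and>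
     M \<subseteq> E \<and> matching M \<and> card X + (\<Sum>P\<in>Ps. card P div 2) \<le> card M"

lemma gsD:
  assumes "good_struct V E X Ps M"
  shows "X \<subseteq> V" "finite Ps" "\<forall>P\<in>Ps. P \<subseteq> V - X" "\<Union>Ps = V - X"
     "\<forall>P\<in>Ps. \<forall>Q\<in>Ps. P \<noteq> Q \<longrightarrow> P \<inter> Q = {}" "\<forall>e\<in>E. e \<inter> X = {} \<longrightarrow> (\<exists>P\<in>Ps. e \<subseteq> P)"
     "M \<subseteq> E" "matching M" "card X + (\<Sum>P\<in>Ps. card P div 2) \<le> card M"
  using assms unfolding good_struct_def by auto

lemma struct_exists:
  assumes "graph_on V E"
  shows "\<exists>X Ps M. good_struct V E X Ps M"
  using assms
proof (induction "card V" arbitrary: V E rule: less_induct)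
  case less
  note G = less.prems
  have fV: "finite V" using G unfolding graph_on_def by blast
  have fE: "finite E" using graph_finite[OF G] .
  have cE: "\<forall>e\<in>E. card e = 2" "\<forall>e\<in>E. e \<subseteq> V" using G unfolding graph_on_def by auto
  show ?case
  proof (cases "V = {}")
    case True
    then have "E = {}" using cE by fastforce
    then have "good_struct V E {} {} {}" using True unfolding good_struct_def matching_def by simp
    then show ?thesis by blast
  next
    case Vne: False
    show ?thesis
    proof (cases "conn V E")
      case False
      then obtain A where A: "A \<subseteq> V" "A \<noteq> {}" "A \<noteq> V" and nocross: "\<forall>e\<in>E. \<not> (e \<inter> A \<noteq> {} \<and> e - A \<noteq> {})"
        unfolding conn_def by blast
      define E1 where "E1 = {e\<in>E. e \<subseteq> A}"
      define E2 where "E2 = {e\<in>E. e \<subseteq> V - A}"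
      have split: "e \<subseteq> A \<or> e \<subseteq> V - A" if "e \<in> E" for e
      proof -
        have "e \<subseteq> V" using cE that by blast
        moreover have "e \<inter> A = {} \<or> e - A = {}" using nocross that by blast
        ultimately show ?thesis by blast
      qed
      have fA: "finite A" using finite_subset[OF A(1) fV] .
      have G1: "graph_on A E1" using G fA unfolding graph_on_def E1_def by auto
      have G2: "graph_on (V - A) E2" using G fV unfolding graph_on_def E2_def by auto
      have lt1: "card A < card V" using A fV by (meson psubsetI psubset_card_mono)
      have "V - A \<subset> V" using A by blast
      then have lt2: "card (V - A) < card V" using fV by (rule psubset_card_mono[rotated])
      obtain X1 Ps1 M1 where S1: "good_struct A E1 X1 Ps1 M1" using less.hyps[OF lt1 G1] by blast
      obtain X2 Ps2 M2 where S2: "good_struct (V - A) E2 X2 Ps2 M2" using less.hyps[OF lt2 G2] by blast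
      define X where "X = X1 \<union> X2"
      define Ps where "Ps = Ps1 \<union> Ps2"
      define M where "M = M1 \<union> M2"
      note s1 = gsD[OF S1] and s2 = gsD[OF S2]
      have fX: "finite X1" "finite X2" using finite_subset[OF s1(1) fA] finite_subset[OF s2(1)] fV by auto
      have cX: "card X = card X1 + card X2" unfolding X_def
        by (rule card_Un_disjoint) (use fX s1(1) s2(1) in auto)
      have M1E: "M1 \<subseteq> E1" "M2 \<subseteq> E2" using s1(7) s2(7) by auto
      have ME: "M1 \<subseteq> E" "M2 \<subseteq> E" using M1E unfolding E1_def E2_def by auto
      have fM: "finite M1" "finite M2" using finite_subset[OF ME(1) fE] finite_subset[OF ME(2) fE] by auto
      have MM: "M1 \<inter> M2 = {}"
      proof (rule ccontr)
        assume "M1 \<inter> M2 \<noteq> {}"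
        then obtain g where "g \<in> M1" "g \<in> M2" by blast
        then have "g \<subseteq> A" "g \<subseteq> V - A" "card g = 2" using M1E cE unfolding E1_def E2_def by auto
        then have "g = {}" by blast
        then show False using \<open>card g = 2\<close> by simp
      qed
      have cM: "card M = card M1 + card M2" unfolding M_def by (rule card_Un_disjoint) (use fM MM in auto)
      have matchM: "matching M"
      proof -
        have m1: "matching M1" and m2: "matching M2" using s1(8) s2(8) .
        have sub1: "\<forall>g\<in>M1. g \<subseteq> A" using M1E(1) unfolding E1_def by blast
        have sub2: "\<forall>g\<in>M2. g \<subseteq> V - A" using M1E(2) unfolding E2_def by blast
        have d: "\<forall>g\<in>M1. \<forall>h\<in>M2. g \<inter> h = {}" using sub1 sub2 by blast
        show ?thesis unfolding M_def using m1 m2 d unfolding matching_def by blast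
      qed
      have sumPs: "(\<Sum>P\<in>Ps. card P div 2) \<le> (\<Sum>P\<in>Ps1. card P div 2) + (\<Sum>P\<in>Ps2. card P div 2)"
      proof -
        have fPs: "finite Ps1" "finite Ps2" using s1(2) s2(2) .
        show ?thesis unfolding Ps_def by (simp add: sum_Un_nat[OF fPs])
      qed
      have "good_struct V E X Ps M"
        unfolding good_struct_def
      proof (intro conjI)
        show "X \<subseteq> V" unfolding X_def using s1(1) s2(1) A by blast
        show "finite Ps" unfolding Ps_def using s1(2) s2(2) by blast
        show "\<forall>P\<in>Ps. P \<subseteq> V - X" unfolding Ps_def X_def using s1(1,3) s2(1,3) A by blast
        show "\<Union>Ps = V - X" unfolding Ps_def X_def using s1(1,4) s2(1,4) A by blast
        show "\<forall>P\<in>Ps. \<forall>Q\<in>Ps. P \<noteq> Q \<longrightarrow> P \<inter> Q = {}"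
        proof (intro ballI impI)
          fix P Q assume P: "P \<in> Ps" and Q: "Q \<in> Ps" and PQ: "P \<noteq> Q"
          have sub: "P \<in> Ps1 \<Longrightarrow> P \<subseteq> A" "P \<in> Ps2 \<Longrightarrow> P \<subseteq> V - A"
                    "Q \<in> Ps1 \<Longrightarrow> Q \<subseteq> A" "Q \<in> Ps2 \<Longrightarrow> Q \<subseteq> V - A" using s1(3) s2(3) by blast+
          show "P \<inter> Q = {}" using P Q PQ s1(5) s2(5) sub unfolding Ps_def by blast
        qed
        show "\<forall>e\<in>E. e \<inter> X = {} \<longrightarrow> (\<exists>P\<in>Ps. e \<subseteq> P)"
        proof (intro ballI impI)
          fix e assume e: "e \<in> E" "e \<inter> X = {}"
          show "\<exists>P\<in>Ps. e \<subseteq> P"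
          proof (cases "e \<subseteq> A")
            case True
            then have "e \<in> E1" "e \<inter> X1 = {}" using e unfolding E1_def X_def by auto
            then show ?thesis using s1(6) unfolding Ps_def by blast
          next
            case False
            then have "e \<subseteq> V - A" using split e by blast
            then have "e \<in> E2" "e \<inter> X2 = {}" using e unfolding E2_def X_def by auto
            then show ?thesis using s2(6) unfolding Ps_def by blast
          qed
        qed
        show "M \<subseteq> E" unfolding M_def using M1E unfolding E1_def E2_def by blast
        show "matching M" by (rule matchM)
        show "card X + (\<Sum>P\<in>Ps. card P div 2) \<le> card M" using cX cM sumPs s1(9) s2(9) by linarith
      qed
      then show ?thesis by blast
    next
      case conn: True
      show ?thesis
      proof (cases "\<exists>v\<in>V. \<forall>M. maxm E M \<longrightarrow> v \<in> \<Union>M")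
        case True
        then obtain v where v: "v \<in> V" "\<And>M. maxm E M \<Longrightarrow> v \<in> \<Union>M" by blast
        define E' where "E' = {e\<in>E. v \<notin> e}"
        have G': "graph_on (V - {v}) E'" using G unfolding graph_on_def E'_def by auto
        have lt: "card (V - {v}) < card V" by (rule card_Diff1_less[OF fV v(1)])
        obtain X' Ps M' where S: "good_struct (V - {v}) E' X' Ps M'" using less.hyps[OF lt G'] by blast
        note s = gsD[OF S]
        obtain M0 where M0: "maxm E M0" using maxm_exists[OF fE] by blast
        have gt: "card M' + 1 \<le> card M0"
        proof (rule ccontr)
          assume "\<not> card M' + 1 \<le> card M0"
          then have le: "card M0 \<le> card M'" by simp
          have "M' \<subseteq> E" using s(7) unfolding E'_def by blast
          then have "maxm E M'" using s(8) M0 le unfolding maxm_def by (meson order_trans)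
          then have "v \<in> \<Union>M'" by (rule v(2))
          then show False using s(7) unfolding E'_def by blast
        qed
        have fX': "finite X'" using finite_subset[OF s(1)] fV by blast
        have vX': "v \<notin> X'" using s(1) by blast
        have "good_struct V E (insert v X') Ps M0"
          unfolding good_struct_def
        proof (intro conjI)
          show "insert v X' \<subseteq> V" using s(1) v by blast
          show "finite Ps" using s(2) by blast
          show "\<forall>P\<in>Ps. P \<subseteq> V - insert v X'" using s(3) by blast
          show "\<Union>Ps = V - insert v X'" using s(4) by blast
          show "\<forall>P\<in>Ps. \<forall>Q\<in>Ps. P \<noteq> Q \<longrightarrow> P \<inter> Q = {}" using s(5) by blast
          show "\<forall>e\<in>E. e \<inter> insert v X' = {} \<longrightarrow> (\<exists>P\<in>Ps. e \<subseteq> P)"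
            using s(6) unfolding E'_def by blast
          show "M0 \<subseteq> E" "matching M0" using M0 unfolding maxm_def by auto
          show "card (insert v X') + (\<Sum>P\<in>Ps. card P div 2) \<le> card M0"
            using s(9) gt fX' vX' by simp
        qed
        then show ?thesis by blast
      next
        case False
        then have miss: "\<forall>v\<in>V. \<exists>M. maxm E M \<and> v \<notin> \<Union>M" by blast
        obtain M0 where M0: "maxm E M0" using maxm_exists[OF fE] by blast
        have c1: "card (V - \<Union>M0) \<le> 1" by (rule gallai[OF G conn miss M0])
        have M0E: "M0 \<subseteq> E" "matching M0" using M0 unfolding maxm_def by auto
        have fM0: "finite M0" using M0E fE by (meson finite_subset)
        have cU: "card (\<Union>M0) = 2 * card M0"
          by (rule card_Union_matching[OF M0E(2) fM0]) (use M0E cE in blast)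
        have UV: "\<Union>M0 \<subseteq> V" using M0E cE by blast
        have "card V = card (V - \<Union>M0) + card (\<Union>M0)"
          using UV fV by (metis card_Diff_subset card_mono add_diff_inverse_nat not_less finite_subset le_add_diff_inverse2)
        then have "card V \<le> 2 * card M0 + 1" using c1 cU by linarith
        then have cv: "card V div 2 \<le> card M0" by linarith
        have "good_struct V E {} {V} M0"
          unfolding good_struct_def using M0E cE cv by auto
        then show ?thesis by blast
      qed
    qed
  qed
qed



definition fI :: "nat \<Rightarrow> int" where
  "fI k = int (k choose 2) - int ((k+1) div 2)"

lemma two_choose: "2 * int (k choose 2) = int k * (int k - 1)"
proof -
  have "even (k * (k - 1))" by (cases "even k") auto
  then have "2 * (k choose 2) = k * (k - 1)" by (simp add: choose_two)
  then have "int (2 * (k choose 2)) = int (k * (k - 1))" by simp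
  then show ?thesis by (cases k) (auto simp: algebra_simps)
qed

lemma F_lower:
  assumes "r \<le> s"
  shows "int r * (2 * int s - int r - 2) - 1 \<le> 2 * (fI s - fI (s - r))"
proof -
  have a: "2 * int (s choose 2) = int s * (int s - 1)" by (rule two_choose)
  have b: "2 * int ((s - r) choose 2) = (int s - int r) * (int s - int r - 1)"
    using two_choose[of "s - r"] assms by (simp add: of_nat_diff)
  have c: "2 * int ((s+1) div 2) \<le> int s + 1" by linarith
  have d: "int s - int r \<le> 2 * int ((s - r + 1) div 2)" using assms by linarith
  have "2 * (fI s - fI (s - r)) = 2 * int (s choose 2) - 2 * int ((s - r) choose 2)
      - 2 * int ((s+1) div 2) + 2 * int ((s - r + 1) div 2)" unfolding fI_def by simp
  also have "\<dots> \<ge> int s * (int s - 1) - (int s - int r) * (int s - int r - 1) - (int s + 1) + (int s - int r)"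
    using a b c d by linarith
  finally show ?thesis by (simp add: algebra_simps)
qed

lemma part_ineq:
  fixes e c m r F :: int
  assumes e0: "0 \<le> e" and c0: "0 \<le> c" and kst: "4*e^2 - 2*e*c \<le> c^2*(c-1)" and cm: "c \<le> 2*m+1"
    and m1: "1 \<le> m" and r0: "0 \<le> r"
    and n1: "r*(2*m+1) \<le> 4*F*m" and n2: "(r*(2*m+1))^2*(8*m+1) \<le> (4*F*m - r*(2*m+1))^2"
  shows "r*e \<le> F*m"
proof -
  define t where "t = 2*m+1"
  have t1: "1 \<le> t" using m1 t_def by simp
  have "4*e^2 - 2*e*t \<le> 4*e^2 - 2*e*c" using e0 cm t_def by (simp add: mult_left_mono)
  also have "\<dots> \<le> c^2*(c-1)" by (rule kst)
  also have "\<dots> \<le> t^2*(t-1)"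
  proof (cases "c \<le> 0")
    case True then have "c = 0" using c0 by simp
    then show ?thesis using t1 by simp
  next
    case False
    have "c^2 \<le> t^2" using c0 cm t_def by (simp add: power_mono)
    moreover have "c - 1 \<le> t - 1" using cm t_def by simp
    moreover have "0 \<le> c - 1" using False by simp
    ultimately show ?thesis by (meson mult_mono zero_le_power2 order_trans)
  qed
  finally have q: "4*e^2 - 2*e*t \<le> t^2*(t-1)" .
  have sq: "(4*e - t)^2 \<le> t^2*(8*m+1)"
  proof -
    have "(4*e - t)^2 = 4*(4*e^2 - 2*e*t) + t^2" by (simp add: power2_eq_square algebra_simps)
    also have "\<dots> \<le> 4*(t^2*(t-1)) + t^2" using q by simp
    also have "\<dots> = t^2*(8*m+1)" unfolding t_def by (simp add: power2_eq_square algebra_simps)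
    finally show ?thesis .
  qed
  have "(r*(4*e - t))^2 = r^2 * (4*e - t)^2" by (simp add: power_mult_distrib)
  also have "\<dots> \<le> r^2 * (t^2*(8*m+1))" using sq by (simp add: mult_left_mono)
  also have "\<dots> = (r*t)^2*(8*m+1)" by (simp add: power_mult_distrib)
  also have "\<dots> \<le> (4*F*m - r*t)^2" using n2 t_def by simp
  finally have "(r*(4*e - t))^2 \<le> (4*F*m - r*t)^2" .
  moreover have "0 \<le> 4*F*m - r*t" using n1 t_def by simp
  ultimately have "r*(4*e - t) \<le> 4*F*m - r*t" by (rule power2_le_imp_le)
  then show ?thesis by (simp add: algebra_simps)
qed

lemma num_ok:
  fixes r m :: nat and F :: int
  assumes m1: "1 \<le> m" and mr: "m \<le> r"
    and h: "(r \<le> 11 \<and> int ((r*(22-r)) div 2) \<le> F) \<or> (12 \<le> r \<and> int r^2 - 1 \<le> 2*F)"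
  shows "int r*(2*int m+1) \<le> 4*F*int m \<and> (int r*(2*int m+1))^2*(8*int m+1) \<le> (4*F*int m - int r*(2*int m+1))^2"
  using h
proof
  assume h1: "r \<le> 11 \<and> int ((r*(22-r)) div 2) \<le> F"
  define F0 where "F0 = (r*(22-r)) div 2"
  note nsc = num_small_cases[OF m1 mr conjunct1[OF h1]]
  have ns: "r * (2*m+1) \<le> 4 * F0 * m" "(r*(2*m+1))^2 * (8*m+1) \<le> (4 * F0 * m - r*(2*m+1))^2"
    unfolding F0_def by (rule conjunct1[OF nsc], rule conjunct2[OF nsc])
  have "int (r*(2*m+1)) \<le> int (4*F0*m)" using ns(1) by (simp only: of_nat_le_iff)
  then have i1: "int r*(2*int m+1) \<le> 4*int F0*int m" by (simp add: algebra_simps)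
  have "int ((r*(2*m+1))^2 * (8*m+1)) \<le> int ((4 * F0 * m - r*(2*m+1))^2)" using ns(2) by (simp only: of_nat_le_iff)
  then have i2: "(int r*(2*int m+1))^2*(8*int m+1) \<le> (4*int F0*int m - int r*(2*int m+1))^2"
    using ns(1) by (simp add: of_nat_diff algebra_simps)
  have FF: "4*int F0*int m \<le> 4*F*int m" using h1 unfolding F0_def by (simp add: mult_right_mono)
  show ?thesis
  proof
    show "int r*(2*int m+1) \<le> 4*F*int m" using i1 FF by linarith
    have "0 \<le> 4*int F0*int m - int r*(2*int m+1)" using i1 by simp
    moreover have "4*int F0*int m - int r*(2*int m+1) \<le> 4*F*int m - int r*(2*int m+1)" using FF by simp
    ultimately have "(4*int F0*int m - int r*(2*int m+1))^2 \<le> (4*F*int m - int r*(2*int m+1))^2"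
      by (simp add: power_mono)
    then show "(int r*(2*int m+1))^2*(8*int m+1) \<le> (4*F*int m - int r*(2*int m+1))^2" using i2 by linarith
  qed
next
  assume h2: "12 \<le> r \<and> int r^2 - 1 \<le> 2*F"
  show ?thesis using num_big[of "int r" "int m" F] h2 m1 mr by simp
qed



lemma dle1: "d \<le> 2 * (d choose 2) + 1"
proof -
  have "2 * int (d choose 2) = int d * (int d - 1)" by (rule two_choose)
  moreover have "0 \<le> (int d - 1) * (int d - 1)" by simp
  ultimately have "int d \<le> 2 * int (d choose 2) + 1" by (simp add: algebra_simps)
  then show ?thesis by linarith
qed

lemma dle2: "1 \<le> d \<Longrightarrow> d \<le> (d choose 2) + 1"
proof -
  assume d: "1 \<le> d"
  have "2 * int (d choose 2) = int d * (int d - 1)" by (rule two_choose)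
  moreover have "0 \<le> (int d - 1) * (int d - 2)"
  proof (cases "d = 1")
    case True then show ?thesis by simp
  next
    case False then have "2 \<le> d" using d by simp
    then show ?thesis by simp
  qed
  ultimately have "2 * int d \<le> 2 * int (d choose 2) + 2" by (simp add: algebra_simps)
  then show ?thesis by linarith
qed

lemma arith_aux:
  fixes sx sr ein ec cv cx cr cxx x y :: nat
  shows "sx = 2*ein \<Longrightarrow> sr = ec \<Longrightarrow> cv \<le> cx \<Longrightarrow> cv = cr + cxx \<Longrightarrow> sx \<le> 2*cxx + x \<Longrightarrow>
    sr \<le> cr + y \<Longrightarrow> 2*(ein+ec) \<le> 2*cx + x + 2*y"
  by presburger

lemma edges_meet_X:
  assumes G: "graph_on V E" and C: "c4free E" and XV: "X \<subseteq> V"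
  shows "card {e\<in>E. e \<inter> X \<noteq> {}} \<le> (card X choose 2) + card X div 2 + card {v\<in>V - X. nbr E v \<inter> X \<noteq> {}}"
proof -
  have fV: "finite V" using G unfolding graph_on_def by blast
  have fE: "finite E" using graph_finite[OF G] .
  have fX: "finite X" using finite_subset[OF XV fV] .
  have eV: "\<forall>e\<in>E. e \<subseteq> V" using G unfolding graph_on_def by blast
  define d where "d v = card (nbr E v \<inter> X)" for v
  define Y where "Y = {v\<in>V - X. nbr E v \<inter> X \<noteq> {}}"
  define Ein where "Ein = {e\<in>E. e \<subseteq> X}"
  define Ec where "Ec = {e\<in>E. e \<inter> X \<noteq> {} \<and> e \<inter> (V - X) \<noteq> {}}"
  have sub: "{e\<in>E. e \<inter> X \<noteq> {}} \<subseteq> Ein \<union> Ec"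
  proof
    fix e assume e: "e \<in> {e\<in>E. e \<inter> X \<noteq> {}}"
    then have "e \<subseteq> V" using eV by blast
    then show "e \<in> Ein \<union> Ec" using e unfolding Ein_def Ec_def by blast
  qed
  have c1: "card {e\<in>E. e \<inter> X \<noteq> {}} \<le> card Ein + card Ec"
  proof -
    have "finite (Ein \<union> Ec)" unfolding Ein_def Ec_def using fE by simp
    then have "card {e\<in>E. e \<inter> X \<noteq> {}} \<le> card (Ein \<union> Ec)" using sub by (rule card_mono)
    also have "\<dots> \<le> card Ein + card Ec" by (rule card_Un_le)
    finally show ?thesis .
  qed
  have h1: "(\<Sum>v\<in>X. d v) = 2 * card Ein" unfolding d_def Ein_def by (rule handshake_in[OF G XV])
  have h2: "(\<Sum>v\<in>V - X. d v) = card Ec" unfolding d_def Ec_def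
    by (rule handshake_cross[OF G XV]) auto
  have pc: "(\<Sum>v\<in>V. d v choose 2) \<le> card X choose 2" unfolding d_def by (rule pair_count[OF G C XV fV])
  have split: "(\<Sum>v\<in>V. d v choose 2) = (\<Sum>v\<in>V - X. d v choose 2) + (\<Sum>v\<in>X. d v choose 2)"
    by (rule sum.subset_diff[OF XV fV])
  have sX: "(\<Sum>v\<in>X. d v) \<le> (\<Sum>v\<in>X. 2 * (d v choose 2) + 1)" by (rule sum_mono) (rule dle1)
  have sX2: "(\<Sum>v\<in>X. 2 * (d v choose 2) + 1) = 2 * (\<Sum>v\<in>X. d v choose 2) + card X"
    unfolding sum.distrib by (simp add: sum_distrib_left)
  have sR: "(\<Sum>v\<in>V - X. d v) \<le> (\<Sum>v\<in>V - X. (d v choose 2) + (if v \<in> Y then 1 else 0))"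
  proof (rule sum_mono)
    fix v assume v: "v \<in> V - X"
    show "d v \<le> (d v choose 2) + (if v \<in> Y then 1 else 0)"
    proof (cases "v \<in> Y")
      case True
      then have "nbr E v \<inter> X \<noteq> {}" unfolding Y_def by blast
      then have "1 \<le> d v" unfolding d_def using fX by (simp add: card_gt_0_iff Suc_le_eq)
      then show ?thesis using True dle2 by simp
    next
      case False
      then have "nbr E v \<inter> X = {}" using v unfolding Y_def by blast
      then show ?thesis using False unfolding d_def by simp
    qed
  qed
  have sR2: "(\<Sum>v\<in>V - X. (d v choose 2) + (if v \<in> Y then 1 else 0)) = (\<Sum>v\<in>V - X. d v choose 2) + card Y"
  proof -
    have "(\<Sum>v\<in>V - X. (if v \<in> Y then 1 else 0)) = card {v\<in>V - X. v \<in> Y}"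
      using card_filter_sum[of "V - X" "\<lambda>v. v \<in> Y"] fV by simp
    also have "{v\<in>V - X. v \<in> Y} = Y" unfolding Y_def by blast
    finally show ?thesis by (simp add: sum.distrib)
  qed
  have "2 * (card Ein + card Ec) \<le> 2 * (card X choose 2) + card X + 2 * card Y"
    by (rule arith_aux[OF h1 h2 pc split sX[unfolded sX2] sR[unfolded sR2]])
  then have "card Ein + card Ec \<le> (card X choose 2) + card X div 2 + card Y" by presburger
  then show ?thesis using c1 unfolding Y_def by (rule order.trans[rotated])
qed



lemma sum_Ps_card:
  assumes "finite Ps" "\<forall>P\<in>Ps. \<forall>Q\<in>Ps. P \<noteq> Q \<longrightarrow> P \<inter> Q = {}" "\<And>P. P \<in> Ps \<Longrightarrow> finite P"
  shows "(\<Sum>P\<in>Ps. card P) = card (\<Union>Ps)"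
proof -
  have "pairwise disjnt Ps" using assms(2) unfolding pairwise_def disjnt_def by blast
  then show ?thesis using card_Union_disjoint[of Ps] assms(3) by simp
qed

lemma upper_bound:
  assumes G: "graph_on V E" and C: "c4free E"
    and Mb: "\<And>M. M \<subseteq> E \<Longrightarrow> matching M \<Longrightarrow> card M \<le> s" and s12: "12 \<le> s"
  shows "int (card E) \<le> int (card V) + fI s"
proof -
  obtain X Ps M where S: "good_struct V E X Ps M" using struct_exists[OF G] by blast
  note g = gsD[OF S]
  have fV: "finite V" using G unfolding graph_on_def by blast
  have fE: "finite E" using graph_finite[OF G] .
  have cE: "\<forall>e\<in>E. card e = 2" using G unfolding graph_on_def by blast
  have fX: "finite X" using finite_subset[OF g(1) fV] .
  define x where "x = card X"
  define ep where "ep P = card {e\<in>E. e \<subseteq> P}" for P :: "'a set"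
  define mp where "mp P = card P div 2" for P :: "'a set"
  have budget: "x + (\<Sum>P\<in>Ps. mp P) \<le> s" using g(9) Mb[OF g(7) g(8)] unfolding x_def mp_def by linarith
  have PV: "P \<subseteq> V" if "P \<in> Ps" for P using g(3) that by blast
  have fP: "finite P" if "P \<in> Ps" for P using finite_subset[OF PV[OF that] fV] .
  have mple: "mp P \<le> (\<Sum>P\<in>Ps. mp P)" if "P \<in> Ps" for P
    by (rule member_le_sum[OF that _ g(2)]) simp
  have ecount: "card E \<le> card {e\<in>E. e \<inter> X \<noteq> {}} + (\<Sum>P\<in>Ps. ep P)"
  proof -
    let ?A = "{e\<in>E. e \<inter> X \<noteq> {}}"
    let ?B = "\<Union>P\<in>Ps. {e\<in>E. e \<subseteq> P}"
    have "E \<subseteq> ?A \<union> ?B" using g(6) by blast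
    moreover have "?A \<union> ?B \<subseteq> E" by blast
    then have "finite (?A \<union> ?B)" using fE by (rule finite_subset)
    ultimately have "card E \<le> card (?A \<union> ?B)" by (rule card_mono[rotated])
    also have "\<dots> \<le> card ?A + card ?B" by (rule card_Un_le)
    also have "card ?B \<le> (\<Sum>P\<in>Ps. card {e\<in>E. e \<subseteq> P})" by (rule card_UN_le[OF g(2)])
    finally show ?thesis unfolding ep_def by simp
  qed
  have EX: "card {e\<in>E. e \<inter> X \<noteq> {}} \<le> (x choose 2) + x div 2 + card {v\<in>V - X. nbr E v \<inter> X \<noteq> {}}"
    unfolding x_def by (rule edges_meet_X[OF G C g(1)])
  have cY: "card {v\<in>V - X. nbr E v \<inter> X \<noteq> {}} \<le> card V - x"
  proof -
    have "card {v\<in>V - X. nbr E v \<inter> X \<noteq> {}} \<le> card (V - X)" by (rule card_mono) (use fV in auto)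
    also have "card (V - X) = card V - x" unfolding x_def by (rule card_Diff_subset[OF fX g(1)])
    finally show ?thesis .
  qed
  have xV: "x \<le> card V" unfolding x_def using card_mono[OF fV g(1)] .
  have m0: "ep P = 0" if "P \<in> Ps" "mp P = 0" for P
  proof -
    have c1: "card P \<le> 1" using that(2) unfolding mp_def by simp
    have "{e\<in>E. e \<subseteq> P} = {}"
    proof (rule ccontr)
      assume "{e\<in>E. e \<subseteq> P} \<noteq> {}"
      then obtain e where e: "e \<in> E" "e \<subseteq> P" by blast
      then have "card e \<le> card P" using fP[OF that(1)] by (simp add: card_mono)
      then show False using cE e c1 by auto
    qed
    then show ?thesis unfolding ep_def by (metis card.empty)
  qed
  have kstP: "4 * int (ep P)^2 - 2 * int (ep P) * int (card P) \<le> int (card P)^2 * (int (card P) - 1)"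
    if "P \<in> Ps" for P unfolding ep_def by (rule kst[OF G C PV[OF that]])
  have cm: "card P \<le> 2 * mp P + 1" "2 * mp P \<le> card P" for P unfolding mp_def by linarith+
  show ?thesis
  proof (cases "x = 0")
    case True
    then have X0: "X = {}" using fX unfolding x_def by simp
    have A0: "{e\<in>E. e \<inter> X \<noteq> {}} = {}" using X0 by simp
    have sumc: "(\<Sum>P\<in>Ps. card P) = card V"
      using sum_Ps_card[OF g(2) g(5) fP] g(4) X0 by simp
    define F where "F = fI s + 2 * int s"
    have twofI: "2 * fI s \<ge> int s * int s - 2 * int s - 1"
    proof -
      have "2 * int (s choose 2) = int s * (int s - 1)" by (rule two_choose)
      moreover have "2 * int ((s+1) div 2) \<le> int s + 1" by linarith
      ultimately show ?thesis unfolding fI_def by (simp add: algebra_simps)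
    qed
    have fI0: "0 \<le> fI s"
    proof -
      have "int s * int s \<ge> 12 * int s" using s12 by (simp add: mult_right_mono)
      then show ?thesis using twofI s12 by linarith
    qed
    have per: "int s * (int (ep P) - int (card P)) \<le> fI s * int (mp P)" if P: "P \<in> Ps" for P
    proof (cases "mp P = 0")
      case True
      then show ?thesis using m0[OF P] by simp
    next
      case False
      then have m1: "1 \<le> mp P" by simp
      have ms: "mp P \<le> s" using mple[OF P] budget by linarith
      have "int s^2 - 1 \<le> 2 * F" using twofI unfolding F_def by (simp add: power2_eq_square)
      then have nu: "int s*(2*int (mp P)+1) \<le> 4*F*int (mp P) \<and>
          (int s*(2*int (mp P)+1))^2*(8*int (mp P)+1) \<le> (4*F*int (mp P) - int s*(2*int (mp P)+1))^2"
        using num_ok[OF m1 ms] s12 by blast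
      have "int s * int (ep P) \<le> F * int (mp P)"
      proof (rule part_ineq)
        show "0 \<le> int (ep P)" by simp
        show "0 \<le> int (card P)" by simp
        show "4 * (int (ep P))\<^sup>2 - 2 * int (ep P) * int (card P) \<le> (int (card P))\<^sup>2 * (int (card P) - 1)"
          by (rule kstP[OF P])
        show "int (card P) \<le> 2 * int (mp P) + 1" using cm(1)[of P] by linarith
        show "1 \<le> int (mp P)" using m1 by simp
        show "0 \<le> int s" by simp
        show "int s * (2 * int (mp P) + 1) \<le> 4 * F * int (mp P)" using nu by blast
        show "(int s * (2 * int (mp P) + 1))\<^sup>2 * (8 * int (mp P) + 1) \<le> (4 * F * int (mp P) - int s * (2 * int (mp P) + 1))\<^sup>2"
          using nu by blast
      qed
      moreover have "2 * int (mp P) \<le> int (card P)" using cm(2)[of P] by linarith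
      ultimately have "int s * int (ep P) - int s * int (card P) \<le> F * int (mp P) - int s * (2 * int (mp P))"
        by (smt (verit) mult_left_mono of_nat_0_le_iff)
      then show ?thesis unfolding F_def by (simp add: algebra_simps)
    qed
    have "int s * (\<Sum>P\<in>Ps. (int (ep P) - int (card P))) = (\<Sum>P\<in>Ps. int s * (int (ep P) - int (card P)))"
      by (simp add: sum_distrib_left)
    also have "\<dots> \<le> (\<Sum>P\<in>Ps. fI s * int (mp P))" by (rule sum_mono) (rule per)
    also have "\<dots> = fI s * int (\<Sum>P\<in>Ps. mp P)" by (simp add: sum_distrib_left)
    also have "\<dots> \<le> fI s * int s"
    proof (rule mult_left_mono[OF _ fI0])
      show "int (\<Sum>P\<in>Ps. mp P) \<le> int s" using budget by linarith
    qed
    finally have "int s * (\<Sum>P\<in>Ps. (int (ep P) - int (card P))) \<le> int s * fI s" by (simp add: mult.commute)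
    then have sumle: "(\<Sum>P\<in>Ps. (int (ep P) - int (card P))) \<le> fI s" using s12 by simp
    have "card E \<le> (\<Sum>P\<in>Ps. ep P)" using ecount A0 by simp
    then have "int (card E) \<le> int (\<Sum>P\<in>Ps. ep P)" by (simp only: of_nat_le_iff)
    also have "\<dots> = (\<Sum>P\<in>Ps. (int (ep P) - int (card P))) + int (\<Sum>P\<in>Ps. card P)"
      by (simp add: sum_subtractf)
    also have "\<dots> \<le> fI s + int (card V)" using sumle sumc by simp
    finally show ?thesis by simp
  next
    case False
    then have x1: "1 \<le> x" by simp
    define r where "r = s - x"
    have xs: "x \<le> s" using budget by simp
    have sr: "s - r = x" unfolding r_def using xs by simp
    define F where "F = fI s - fI x"
    have Fl: "int r * (2 * int s - int r - 2) - 1 \<le> 2 * F"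
      using F_lower[of r s] sr unfolding F_def r_def by simp
    have per: "int r * int (ep P) \<le> F * int (mp P)" if P: "P \<in> Ps" for P
    proof (cases "mp P = 0")
      case True
      then show ?thesis using m0[OF P] by simp
    next
      case False
      then have m1: "1 \<le> mp P" by simp
      have mr: "mp P \<le> r" using mple[OF P] budget unfolding r_def by linarith
      have hyp: "(r \<le> 11 \<and> int ((r*(22-r)) div 2) \<le> F) \<or> (12 \<le> r \<and> int r^2 - 1 \<le> 2*F)"
      proof (cases "r \<le> 11")
        case True
        have "int r * (22 - int r) \<le> int r * (2 * int s - int r - 2)"
          using s12 by (simp add: mult_left_mono)
        then have "int r * (22 - int r) - 1 \<le> 2 * F" using Fl by linarith
        moreover have "int (r*(22-r)) = int r * (22 - int r)" using True by (simp add: of_nat_diff)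
        moreover have "2 * int ((r*(22-r)) div 2) \<le> int (r*(22-r))" by linarith
        ultimately have "int ((r*(22-r)) div 2) \<le> F" by presburger
        then show ?thesis using True by blast
      next
        case False
        have "int r \<le> 2 * int s - int r - 2" using xs x1 unfolding r_def by linarith
        then have "int r * int r \<le> int r * (2 * int s - int r - 2)" by (simp add: mult_left_mono)
        then have "int r^2 - 1 \<le> 2 * F" using Fl by (simp add: power2_eq_square)
        then show ?thesis using False by simp
      qed
      have nu: "int r*(2*int (mp P)+1) \<le> 4*F*int (mp P) \<and>
          (int r*(2*int (mp P)+1))^2*(8*int (mp P)+1) \<le> (4*F*int (mp P) - int r*(2*int (mp P)+1))^2"
        by (rule num_ok[OF m1 mr hyp])
      show "int r * int (ep P) \<le> F * int (mp P)"
      proof (rule part_ineq)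
        show "0 \<le> int (ep P)" by simp
        show "0 \<le> int (card P)" by simp
        show "4 * (int (ep P))\<^sup>2 - 2 * int (ep P) * int (card P) \<le> (int (card P))\<^sup>2 * (int (card P) - 1)"
          by (rule kstP[OF P])
        show "int (card P) \<le> 2 * int (mp P) + 1" using cm(1)[of P] by linarith
        show "1 \<le> int (mp P)" using m1 by simp
        show "0 \<le> int r" by simp
        show "int r * (2 * int (mp P) + 1) \<le> 4 * F * int (mp P)" using nu by blast
        show "(int r * (2 * int (mp P) + 1))\<^sup>2 * (8 * int (mp P) + 1) \<le> (4 * F * int (mp P) - int r * (2 * int (mp P) + 1))\<^sup>2"
          using nu by blast
      qed
    qed
    have sumep: "int (\<Sum>P\<in>Ps. ep P) \<le> F"
    proof (cases "r = 0")
      case True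
      then have "(\<Sum>P\<in>Ps. mp P) = 0" using budget unfolding r_def by simp
      then have "\<forall>P\<in>Ps. mp P = 0" using g(2) by simp
      then have "(\<Sum>P\<in>Ps. ep P) = 0" using m0 by simp
      moreover have "F = 0" unfolding F_def using True xs unfolding r_def by simp
      ultimately show ?thesis by simp
    next
      case False
      have "int r \<le> 2 * int s - int r - 2" using xs x1 unfolding r_def by linarith
      then have "int r * int r \<le> int r * (2 * int s - int r - 2)" by (simp add: mult_left_mono)
      then have "int r * int r - 1 \<le> 2 * F" using Fl by linarith
      moreover have "1 \<le> int r * int r"
      proof -
        have r1: "1 \<le> int r" using False by simp
        show ?thesis using mult_mono[OF r1 r1] by simp
      qed
      ultimately have F0: "0 \<le> F" by linarith
      have "int r * int (\<Sum>P\<in>Ps. ep P) = (\<Sum>P\<in>Ps. int r * int (ep P))" by (simp add: sum_distrib_left)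
      also have "\<dots> \<le> (\<Sum>P\<in>Ps. F * int (mp P))" by (rule sum_mono) (rule per)
      also have "\<dots> = F * int (\<Sum>P\<in>Ps. mp P)" by (simp add: sum_distrib_left)
      also have "\<dots> \<le> F * int r"
      proof (rule mult_left_mono[OF _ F0])
        show "int (\<Sum>P\<in>Ps. mp P) \<le> int r" using budget unfolding r_def by linarith
      qed
      finally have "int r * int (\<Sum>P\<in>Ps. ep P) \<le> int r * F" by (simp add: mult.commute)
      then show ?thesis using False by simp
    qed
    have "int (card E) \<le> int (x choose 2) + int (x div 2) + (int (card V) - int x) + F"
      using ecount EX cY sumep xV by linarith
    also have "\<dots> = int (card V) + fI s"
    proof -
      have "int (x div 2) + int ((x+1) div 2) = int x" by linarith
      then show ?thesis unfolding F_def fI_def by linarith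
    qed
    finally show ?thesis .
  qed
qed



lemma is_graph_on: "is_graph n G \<Longrightarrow> graph_on {..<n} G"
  unfolding is_graph_def graph_on_def by auto

lemma UK22: "\<Union>K22 = {0,1,2,3}"
  unfolding K22_def by auto

lemma c4_of_K22:
  assumes G: "is_graph n G" and nK: "\<not> subgraph_of K22 G"
  shows "c4free G"
  unfolding c4free_def
proof (intro allI impI)
  fix a b :: nat assume ab: "a \<noteq> b"
  have go: "graph_on {..<n} G" using is_graph_on[OF G] .
  have fin: "finite (nbr G a \<inter> nbr G b)"
    using graph_nbr_sub[OF go, of a] by (meson finite_Int finite_lessThan finite_subset)
  show "card (nbr G a \<inter> nbr G b) \<le> 1"
  proof (rule ccontr)
    assume "\<not> card (nbr G a \<inter> nbr G b) \<le> 1"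
    then obtain c d where cd: "c \<in> nbr G a \<inter> nbr G b" "d \<in> nbr G a \<inter> nbr G b" "c \<noteq> d"
      using fin by (metis One_nat_def card_le_Suc0_iff_eq)
    have E: "{a,c} \<in> G" "{b,c} \<in> G" "{a,d} \<in> G" "{b,d} \<in> G" using cd unfolding nbr_def by auto
    have ne: "a \<noteq> c" "b \<noteq> c" "a \<noteq> d" "b \<noteq> d"
      using cd graph_noloop[OF go, of a] graph_noloop[OF go, of b] by auto
    define f where "f i = (if i = (0::nat) then a else if i = 1 then b else if i = 2 then c else d)" for i
    have "inj_on f (\<Union>K22)" unfolding UK22 inj_on_def f_def using ab cd(3) ne by auto
    moreover have "\<forall>e\<in>K22. f ` e \<in> G" unfolding K22_def f_def using E by (auto simp: insert_commute)
    ultimately have "subgraph_of K22 G" unfolding subgraph_of_def by blast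
    then show False using nK by simp
  qed
qed

lemma UMG: "\<Union>(matching_graph k) = {..<2*k}"
proof
  show "\<Union>(matching_graph k) \<subseteq> {..<2*k}" unfolding matching_graph_def by auto
  show "{..<2*k} \<subseteq> \<Union>(matching_graph k)"
  proof
    fix j assume j: "j \<in> {..<2*k}"
    then have "j div 2 < k" by auto
    moreover have "j \<in> {2*(j div 2), 2*(j div 2)+1}" by auto
    ultimately show "j \<in> \<Union>(matching_graph k)" unfolding matching_graph_def by blast
  qed
qed

lemma match_bound_of:
  assumes G: "is_graph n G" and nM: "\<not> subgraph_of (matching_graph (s+1)) G"
    and MG: "M \<subseteq> G" and mM: "matching M"
  shows "card M \<le> s"
proof (rule ccontr)
  assume "\<not> card M \<le> s"
  then have "s + 1 \<le> card M" by simp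
  then obtain M' where M': "M' \<subseteq> M" "card M' = s + 1" "finite M'" by (rule obtain_subset_with_card_n)
  obtain h where h: "bij_betw h {0..<s+1} M'" using ex_bij_betw_nat_finite[OF M'(3)] M'(2) by auto
  have two: "\<forall>e\<in>M'. \<exists>pq. fst pq \<noteq> snd pq \<and> e = {fst pq, snd pq}"
  proof
    fix e assume "e \<in> M'"
    then have "card e = 2" using M'(1) MG G unfolding is_graph_def by blast
    then obtain p q where "e = {p,q}" "p \<noteq> q" by (meson card_2_iff)
    then show "\<exists>pq. fst pq \<noteq> snd pq \<and> e = {fst pq, snd pq}" by (intro exI[of _ "(p,q)"]) auto
  qed
  then obtain g where g: "\<forall>e\<in>M'. fst (g e) \<noteq> snd (g e) \<and> e = {fst (g e), snd (g e)}"
    by metis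
  define f where "f k = (if even k then fst (g (h (k div 2))) else snd (g (h (k div 2))))" for k
  have hin: "h i \<in> M'" if "i < s + 1" for i using h that unfolding bij_betw_def by auto
  have fin: "f k \<in> h (k div 2)" if "k < 2*(s+1)" for k
  proof -
    have "k div 2 < s + 1" using that by auto
    then show ?thesis using g hin unfolding f_def by (metis insertCI singletonI)
  qed
  have inj: "inj_on f {..<2*(s+1)}"
  proof (rule inj_onI)
    fix k1 k2 assume k1: "k1 \<in> {..<2*(s+1)}" and k2: "k2 \<in> {..<2*(s+1)}" and eq: "f k1 = f k2"
    show "k1 = k2"
    proof (cases "k1 div 2 = k2 div 2")
      case True
      have i: "k1 div 2 < s + 1" using k1 by auto
      have "even k1 = even k2"
      proof (rule ccontr)
        assume "even k1 \<noteq> even k2"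
        then have "fst (g (h (k1 div 2))) = snd (g (h (k1 div 2)))" using eq True unfolding f_def
          by (cases "even k1") auto
        then show False using g hin[OF i] by blast
      qed
      then show ?thesis using True by (metis div_mult_mod_eq even_iff_mod_2_eq_zero odd_iff_mod_2_eq_one)
    next
      case False
      have i1: "k1 div 2 < s + 1" and i2: "k2 div 2 < s + 1" using k1 k2 by auto
      have ne: "h (k1 div 2) \<noteq> h (k2 div 2)" using h False i1 i2 unfolding bij_betw_def inj_on_def by auto
      have in1: "f k1 \<in> h (k1 div 2)" "f k2 \<in> h (k2 div 2)" using fin k1 k2 by auto
      have inM: "h (k1 div 2) \<in> M" "h (k2 div 2) \<in> M" using hin[OF i1] hin[OF i2] M'(1) by auto
      have "h (k1 div 2) \<inter> h (k2 div 2) = {}" using mM inM ne unfolding matching_def by blast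
      then show ?thesis using in1 eq by auto
    qed
  qed
  have edges: "\<forall>e\<in>matching_graph (s+1). f ` e \<in> G"
  proof
    fix e assume "e \<in> matching_graph (s+1)"
    then obtain i where i: "e = {2*i, 2*i+1}" "i < s + 1" unfolding matching_graph_def by blast
    have "f ` e = {fst (g (h i)), snd (g (h i))}" unfolding i f_def by (simp add: insert_commute)
    also have "\<dots> = h i" using bspec[OF g hin[OF i(2)]] by simp
    finally have fe: "f ` e = h i" .
    have "h i \<in> G" using hin[OF i(2)] M'(1) MG by (meson subsetD)
    then show "f ` e \<in> G" unfolding fe .
  qed
  have "subgraph_of (matching_graph (s+1)) G" unfolding subgraph_of_def UMG using inj edges by blast
  then show False using nM by simp
qed



lemma noK22_of_common:
  assumes G: "is_graph n G"
    and C: "\<And>x y u1 u2. x \<noteq> y \<Longrightarrow> u1 \<in> nbr G x \<Longrightarrow> u1 \<in> nbr G y \<Longrightarrow> u2 \<in> nbr G x \<Longrightarrow> u2 \<in> nbr G y \<Longrightarrow> u1 = u2"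
  shows "\<not> subgraph_of K22 G"
proof
  assume "subgraph_of K22 G"
  then obtain f where f: "inj_on f {0,1,2,3}" "\<forall>e\<in>K22. f ` e \<in> G" unfolding subgraph_of_def UK22 by blast
  have E: "{f 0, f 2} \<in> G" "{f 0, f 3} \<in> G" "{f 1, f 2} \<in> G" "{f 1, f 3} \<in> G"
    using f(2) unfolding K22_def by auto
  have ne: "f 0 \<noteq> f 1" "f 2 \<noteq> f 3" using f(1) unfolding inj_on_def by auto
  have "f 2 \<in> nbr G (f 0)" "f 2 \<in> nbr G (f 1)" "f 3 \<in> nbr G (f 0)" "f 3 \<in> nbr G (f 1)"
    using E unfolding nbr_def by auto
  then have "f 2 = f 3" using C[OF ne(1)] by blast
  then show False using ne(2) by simp
qed

lemma noM_of_cover: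
  assumes cov: "\<forall>e\<in>G. e \<inter> {..<s} \<noteq> {}"
  shows "\<not> subgraph_of (matching_graph (s+1)) G"
proof
  assume "subgraph_of (matching_graph (s+1)) G"
  then obtain f where f: "inj_on f {..<2*(s+1)}" "\<forall>e\<in>matching_graph (s+1). f ` e \<in> G"
    unfolding subgraph_of_def UMG by blast
  have ex: "\<exists>v. v \<in> f ` {2*i, 2*i+1} \<and> v < s" if "i < s + 1" for i
  proof -
    have "{2*i, 2*i+1} \<in> matching_graph (s+1)" unfolding matching_graph_def using that by blast
    then have "f ` {2*i, 2*i+1} \<in> G" using f(2) by blast
    then show ?thesis using cov by blast
  qed
  define hh where "hh i = (SOME v. v \<in> f ` {2*i, 2*i+1} \<and> v < s)" for i
  have hh: "hh i \<in> f ` {2*i, 2*i+1}" "hh i < s" if "i < s + 1" for i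
    using someI_ex[OF ex[OF that]] unfolding hh_def by auto
  have "inj_on hh {..<s+1}"
  proof (rule inj_onI)
    fix i j assume i: "i \<in> {..<s+1}" and j: "j \<in> {..<s+1}" and eq: "hh i = hh j"
    obtain k1 where k1: "k1 \<in> {2*i, 2*i+1}" "hh i = f k1" using hh(1)[of i] i by auto
    obtain k2 where k2: "k2 \<in> {2*j, 2*j+1}" "hh j = f k2" using hh(1)[of j] j by auto
    have "k1 \<in> {..<2*(s+1)}" "k2 \<in> {..<2*(s+1)}" using k1 k2 i j by auto
    then have "k1 = k2" using f(1) k1 k2 eq unfolding inj_on_def by metis
    then show "i = j" using k1(1) k2(1) by auto
  qed
  moreover have "hh ` {..<s+1} \<subseteq> {..<s}" using hh(2) by auto
  ultimately have "card {..<s+1} \<le> card {..<s::nat}" by (rule card_inj_on_le) simp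
  then show False by simp
qed



lemma construction:
  assumes s1: "1 \<le> s" and n: "s + (s choose 2) \<le> n"
  shows "\<exists>G. is_graph n G \<and> \<not> subgraph_of K22 G \<and> \<not> subgraph_of (matching_graph (s+1)) G \<and>
     card G = n + (s choose 2) - (s+1) div 2"
proof -
  define S where "S = {..<s}"
  define P2 where "P2 = {p. p \<subseteq> S \<and> card p = 2}"
  have fS: "finite S" unfolding S_def by simp
  have cP2: "card P2 = s choose 2" unfolding P2_def using n_subsets[OF fS, of 2] S_def by simp
  have fP2: "finite P2" unfolding P2_def by (rule finite_subset[of _ "Pow S"]) (use fS in auto)
  define W0 where "W0 = {s..<n}"
  have cW0: "card W0 = n - s" unfolding W0_def by simp
  have "card P2 \<le> card W0" using cP2 cW0 n by simp
  then obtain w where w: "w ` P2 \<subseteq> W0" "inj_on w P2"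
    using card_le_inj[OF fP2, of W0] unfolding W0_def by auto
  define R where "R = W0 - w ` P2"
  have cR: "card R = n - s - (s choose 2)"
  proof -
    have "card R = card W0 - card (w ` P2)" unfolding R_def
      by (rule card_Diff_subset) (use fP2 w in auto)
    also have "card (w ` P2) = s choose 2" using card_image[OF w(2)] cP2 by simp
    finally show ?thesis using cW0 by simp
  qed
  have pS: "a < s" if "p \<in> P2" "a \<in> p" for p a using that unfolding P2_def S_def by auto
  have pcard: "card p = 2" if "p \<in> P2" for p using that unfolding P2_def by auto
  have wr: "s \<le> w p \<and> w p < n" if "p \<in> P2" for p using w(1) that unfolding W0_def by auto
  have Rr: "s \<le> r \<and> r < n \<and> r \<notin> w ` P2" if "r \<in> R" for r using that unfolding R_def W0_def by auto
  define E1 where "E1 = (\<lambda>(p,a). {a, w p}) ` (SIGMA p:P2. p)"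
  define E2 where "E2 = (\<lambda>i. {2*i, 2*i+1}) ` {..< s div 2}"
  define E3 where "E3 = (\<lambda>r. {0, r}) ` R"
  define G where "G = E1 \<union> E2 \<union> E3"
  have E1m: "e \<in> E1 \<longleftrightarrow> (\<exists>p\<in>P2. \<exists>a\<in>p. e = {a, w p})" for e unfolding E1_def by auto
  have E2m: "e \<in> E2 \<longleftrightarrow> (\<exists>i. 2*i+1 < s \<and> e = {2*i, 2*i+1})" for e
  proof -
    have "2*i+1 < s \<longleftrightarrow> i < s div 2" for i :: nat by linarith
    then show ?thesis unfolding E2_def by auto
  qed
  have E3m: "e \<in> E3 \<longleftrightarrow> (\<exists>r\<in>R. e = {0, r})" for e unfolding E3_def by auto
  have isg: "is_graph n G" unfolding is_graph_def
  proof
    fix e assume e: "e \<in> G"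
    show "e \<subseteq> {..<n} \<and> card e = 2"
    proof (cases "e \<in> E1")
      case True
      then obtain p a where pa: "p \<in> P2" "a \<in> p" "e = {a, w p}" using E1m by blast
      then show ?thesis using pS[OF pa(1,2)] wr[OF pa(1)] n by auto
    next
      case False
      show ?thesis
      proof (cases "e \<in> E2")
        case True
        then obtain i where i: "2*i+1 < s" "e = {2*i, 2*i+1}" using E2m by blast
        then show ?thesis using n by auto
      next
        case False
        then have "e \<in> E3" using e \<open>e \<notin> E1\<close> unfolding G_def by blast
        then obtain r where r: "r \<in> R" "e = {0, r}" using E3m by blast
        then show ?thesis using Rr[OF r(1)] s1 by auto
      qed
    qed
  qed
  have cov: "\<forall>e\<in>G. e \<inter> {..<s} \<noteq> {}"
  proof
    fix e assume e: "e \<in> G"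
    show "e \<inter> {..<s} \<noteq> {}"
    proof (cases "e \<in> E1")
      case True
      then obtain p a where pa: "p \<in> P2" "a \<in> p" "e = {a, w p}" using E1m by blast
      then show ?thesis using pS[OF pa(1,2)] by auto
    next
      case False
      show ?thesis
      proof (cases "e \<in> E2")
        case True
        then obtain i where i: "2*i+1 < s" "e = {2*i, 2*i+1}" using E2m by blast
        then show ?thesis by auto
      next
        case False
        then have "e \<in> E3" using e \<open>e \<notin> E1\<close> unfolding G_def by blast
        then obtain r where r: "r \<in> R" "e = {0, r}" using E3m by blast
        then show ?thesis using s1 by auto
      qed
    qed
  qed
  define partner where "partner a = (if even a then a + 1 else a - 1)" for a :: nat
  have partner_inj: "partner a = partner b \<Longrightarrow> a = b" for a b
    unfolding partner_def by (auto split: if_splits) presburger+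
  have NW: "u \<in> p" if p: "p \<in> P2" and e: "{w p, u} \<in> G" for p u
  proof -
    have wp: "s \<le> w p" using wr[OF p] by simp
    consider "{w p, u} \<in> E1" | "{w p, u} \<in> E2" | "{w p, u} \<in> E3" using e unfolding G_def by blast
    then show ?thesis
    proof cases
      case 1
      then obtain q a where qa: "q \<in> P2" "a \<in> q" "{w p, u} = {a, w q}" using E1m by blast
      have "a < s" using pS[OF qa(1,2)] .
      then have "w p = w q \<and> u = a" using qa(3) wp by (auto simp: doubleton_eq_iff)
      then have "p = q" "u = a" using w(2) p qa(1) unfolding inj_on_def by auto
      then show ?thesis using qa(2) by simp
    next
      case 2
      then obtain i where "2*i+1 < s" "{w p, u} = {2*i, 2*i+1}" using E2m by blast
      then show ?thesis using wp by (auto simp: doubleton_eq_iff)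
    next
      case 3
      then obtain r where r: "r \<in> R" "{w p, u} = {0, r}" using E3m by blast
      have "w p \<noteq> 0" using wp s1 by simp
      then have "w p = r" using r(2) by (auto simp: doubleton_eq_iff)
      then show ?thesis using Rr[OF r(1)] p by auto
    qed
  qed
  have NR: "u = 0" if r: "r \<in> R" and e: "{r, u} \<in> G" for r u
  proof -
    have rr: "s \<le> r" "r \<notin> w ` P2" using Rr[OF r] by auto
    consider "{r, u} \<in> E1" | "{r, u} \<in> E2" | "{r, u} \<in> E3" using e unfolding G_def by blast
    then show ?thesis
    proof cases
      case 1
      then obtain q a where qa: "q \<in> P2" "a \<in> q" "{r, u} = {a, w q}" using E1m by blast
      have "a < s" using pS[OF qa(1,2)] .
      then have "r = w q" using qa(3) rr by (auto simp: doubleton_eq_iff)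
      then show ?thesis using rr qa(1) by auto
    next
      case 2
      then obtain i where "2*i+1 < s" "{r, u} = {2*i, 2*i+1}" using E2m by blast
      then show ?thesis using rr by (auto simp: doubleton_eq_iff)
    next
      case 3
      then obtain r' where r': "r' \<in> R" "{r, u} = {0, r'}" using E3m by blast
      have "r \<noteq> 0" using rr s1 by simp
      then show ?thesis using r'(2) by (auto simp: doubleton_eq_iff)
    qed
  qed
  have NS: "u = partner a" if a: "a < s" and u: "u < s" and e: "{a, u} \<in> G" for a u
  proof -
    consider "{a, u} \<in> E1" | "{a, u} \<in> E2" | "{a, u} \<in> E3" using e unfolding G_def by blast
    then show ?thesis
    proof cases
      case 1
      then obtain q b where qb: "q \<in> P2" "b \<in> q" "{a, u} = {b, w q}" using E1m by blast
      then show ?thesis using wr[OF qb(1)] a u by (auto simp: doubleton_eq_iff)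
    next
      case 2
      then obtain i where "2*i+1 < s" "{a, u} = {2*i, 2*i+1}" using E2m by blast
      then show ?thesis unfolding partner_def by (auto simp: doubleton_eq_iff)
    next
      case 3
      then obtain r where r: "r \<in> R" "{a, u} = {0, r}" using E3m by blast
      then show ?thesis using Rr[OF r(1)] a u by (auto simp: doubleton_eq_iff)
    qed
  qed
  have NS2: "(\<exists>p\<in>P2. a \<in> p \<and> u = w p) \<or> (a = 0 \<and> u \<in> R)"
    if a: "a < s" and u: "s \<le> u" and e: "{a, u} \<in> G" for a u
  proof -
    consider "{a, u} \<in> E1" | "{a, u} \<in> E2" | "{a, u} \<in> E3" using e unfolding G_def by blast
    then show ?thesis
    proof cases
      case 1
      then obtain q b where qb: "q \<in> P2" "b \<in> q" "{a, u} = {b, w q}" using E1m by blast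
      have "b < s" using pS[OF qb(1,2)] .
      then have "a = b \<and> u = w q" using qb(3) a u wr[OF qb(1)] by (auto simp: doubleton_eq_iff)
      then show ?thesis using qb by blast
    next
      case 2
      then obtain i where "2*i+1 < s" "{a, u} = {2*i, 2*i+1}" using E2m by blast
      then show ?thesis using u by (auto simp: doubleton_eq_iff)
    next
      case 3
      then obtain r where r: "r \<in> R" "{a, u} = {0, r}" using E3m by blast
      then have "a = 0 \<and> u = r" using a Rr[OF r(1)] by (auto simp: doubleton_eq_iff)
      then show ?thesis using r by blast
    qed
  qed
  have Nbig: "{v, u} \<notin> G" if "n \<le> v" for v u
    using isg that unfolding is_graph_def by auto
  have vtype: "v < s \<or> v \<in> w ` P2 \<or> v \<in> R \<or> n \<le> v" for v
    unfolding R_def W0_def by auto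
  have Nsmall: "u < s" if "s \<le> x" "u \<in> nbr G x" for x u
  proof -
    have e: "{x, u} \<in> G" using that(2) unfolding nbr_def by simp
    from vtype[of x] show ?thesis
    proof (elim disjE)
      assume "x < s" then show ?thesis using that by simp
    next
      assume "x \<in> w ` P2"
      then obtain p where p: "p \<in> P2" "x = w p" by blast
      then show ?thesis using NW[OF p(1)] e pS[OF p(1)] by blast
    next
      assume xR: "x \<in> R" then have "u = 0" using NR[OF xR e] by blast
      then show ?thesis using s1 by simp
    next
      assume "n \<le> x" then show ?thesis using Nbig e by blast
    qed
  qed
  have common: "u1 = u2" if xy: "x \<noteq> y" and u1: "u1 \<in> nbr G x" "u1 \<in> nbr G y"
    and u2: "u2 \<in> nbr G x" "u2 \<in> nbr G y" for x y u1 u2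
  proof -
    have sym: "u \<in> nbr G v \<Longrightarrow> {v, u} \<in> G" for u v unfolding nbr_def by simp
    have one: "u1 = u2" if xs: "s \<le> x" and xy: "x \<noteq> y"
       and u1: "u1 \<in> nbr G x" "u1 \<in> nbr G y" and u2: "u2 \<in> nbr G x" "u2 \<in> nbr G y" for x y u1 u2
    proof -
      have ls: "u1 < s" "u2 < s" using Nsmall[OF xs] u1 u2 by auto
      from vtype[of x] xs consider "x \<in> w ` P2" | "x \<in> R" | "n \<le> x" by linarith
      then show ?thesis
      proof cases
        case 1
        then obtain p where p: "p \<in> P2" "x = w p" by blast
        have inp: "u1 \<in> p" "u2 \<in> p" using NW[OF p(1)] sym u1 u2 p(2) by blast+
        from vtype[of y] show ?thesis
        proof (elim disjE)
          assume ys: "y < s"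
          show ?thesis using NS[OF ys ls(1)] NS[OF ys ls(2)] sym u1 u2 by metis
        next
          assume "y \<in> w ` P2"
          then obtain q where q: "q \<in> P2" "y = w q" by blast
          have inq: "u1 \<in> q" "u2 \<in> q" using NW[OF q(1)] sym u1 u2 q(2) by blast+
          have pq: "p \<noteq> q" using xy p q by blast
          show ?thesis
          proof (rule ccontr)
            assume ne: "u1 \<noteq> u2"
            have "p = {u1, u2}"
              using inp pcard[OF p(1)] ne by (metis card_2_iff doubleton_eq_iff insertE singletonD)
            moreover have "q = {u1, u2}"
              using inq pcard[OF q(1)] ne by (metis card_2_iff doubleton_eq_iff insertE singletonD)
            ultimately show False using pq by simp
          qed
        next
          assume "y \<in> R" then show ?thesis using NR sym u1 u2 by metis
        next
          assume "n \<le> y" then show ?thesis using Nbig sym u1 by metis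
        qed
      next
        case 2 then show ?thesis using NR sym u1 u2 by metis
      next
        case 3 then show ?thesis using Nbig sym u1 by metis
      qed
    qed
    show ?thesis
    proof (cases "s \<le> x")
      case True show ?thesis by (rule one[OF True xy u1 u2])
    next
      case xs: False
      show ?thesis
      proof (cases "s \<le> y")
        case True show ?thesis by (rule one[OF True xy[symmetric] u1(2,1) u2(2,1)])
      next
        case ys: False
        have xs': "x < s" and ys': "y < s" using xs ys by auto
        have key: "u = w {x, y}" if u: "u \<in> nbr G x" "u \<in> nbr G y" for u
        proof -
          have ex: "{x, u} \<in> G" "{y, u} \<in> G" using sym u by auto
          have us: "s \<le> u"
          proof (rule ccontr)
            assume "\<not> s \<le> u"
            then have "u < s" by simp
            then have "u = partner x" "u = partner y" using NS[OF xs' _ ex(1)] NS[OF ys' _ ex(2)] by auto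
            then show False using partner_inj xy by metis
          qed
          have c1: "(\<exists>p\<in>P2. x \<in> p \<and> u = w p) \<or> (x = 0 \<and> u \<in> R)" by (rule NS2[OF xs' us ex(1)])
          have c2: "(\<exists>p\<in>P2. y \<in> p \<and> u = w p) \<or> (y = 0 \<and> u \<in> R)" by (rule NS2[OF ys' us ex(2)])
          have nR: "u \<notin> R"
          proof
            assume uR: "u \<in> R"
            then have "u \<notin> w ` P2" using Rr by blast
            then have "x = 0" "y = 0" using c1 c2 by auto
            then show False using xy by simp
          qed
          obtain p where p: "p \<in> P2" "x \<in> p" "u = w p" using c1 nR by blast
          obtain q where q: "q \<in> P2" "y \<in> q" "u = w q" using c2 nR by blast
          have "p = q" using w(2) p q unfolding inj_on_def by metis
          then have "{x, y} \<subseteq> p" using p q by auto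
          moreover have "card {x, y} = 2" using xy by simp
          ultimately have "p = {x, y}" using pcard[OF p(1)] p(1) unfolding P2_def S_def
            by (metis card_subset_eq finite_lessThan finite_subset mem_Collect_eq)
          then show ?thesis using p by simp
        qed
        show ?thesis using key[OF u1] key[OF u2] by simp
      qed
    qed
  qed
  have nK: "\<not> subgraph_of K22 G" by (rule noK22_of_common[OF isg common])
  have nM: "\<not> subgraph_of (matching_graph (s+1)) G" by (rule noM_of_cover[OF cov])
  have fR: "finite R" unfolding R_def W0_def by simp
  have cE1: "card E1 = 2 * (s choose 2)"
  proof -
    have "inj_on (\<lambda>(p,a). {a, w p}) (SIGMA p:P2. p)"
    proof (rule inj_onI, clarify)
      fix p a q b assume pa: "p \<in> P2" "a \<in> p" and qb: "q \<in> P2" "b \<in> q" and eq: "{a, w p} = {b, w q}"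
      have "a < s" "b < s" using pS pa qb by auto
      then have "a = b \<and> w p = w q" using eq wr[OF pa(1)] wr[OF qb(1)] by (auto simp: doubleton_eq_iff)
      then show "p = q \<and> a = b" using w(2) pa(1) qb(1) unfolding inj_on_def by auto
    qed
    then have "card E1 = card (SIGMA p:P2. p)" unfolding E1_def by (rule card_image)
    also have "\<dots> = (\<Sum>p\<in>P2. card p)"
    proof (rule card_SigmaI[OF fP2])
      show "\<forall>a\<in>P2. finite a" using pcard by (metis card.infinite zero_neq_numeral)
    qed
    also have "\<dots> = (\<Sum>p\<in>P2. 2)" using pcard by simp
    finally show ?thesis using cP2 by simp
  qed
  have cE2: "card E2 = s div 2"
  proof -
    have "inj_on (\<lambda>i. {2*i, 2*i+1}) {..< s div 2}"
      by (rule inj_onI) (auto simp: doubleton_eq_iff)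
    then show ?thesis unfolding E2_def by (simp add: card_image)
  qed
  have cE3: "card E3 = card R"
  proof -
    have "inj_on (\<lambda>r. {0, r}) R"
    proof (rule inj_onI)
      fix r r' assume "r \<in> R" "r' \<in> R" "{0, r} = {0::nat, r'}"
      then show "r = r'" using Rr s1 by (auto simp: doubleton_eq_iff)
    qed
    then show ?thesis unfolding E3_def by (simp add: card_image)
  qed
  have d12: "E1 \<inter> E2 = {}"
  proof (rule ccontr)
    assume "E1 \<inter> E2 \<noteq> {}"
    then obtain e where e: "e \<in> E1" "e \<in> E2" by blast
    obtain p a where pa: "p \<in> P2" "a \<in> p" "e = {a, w p}" using e(1) E1m by blast
    obtain i where i: "2*i+1 < s" "e = {2*i, 2*i+1}" using e(2) E2m by blast
    have "w p \<in> e" using pa(3) by simp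
    then have "w p < s" using i by auto
    then show False using wr[OF pa(1)] by simp
  qed
  have d3: "(E1 \<union> E2) \<inter> E3 = {}"
  proof (rule ccontr)
    assume "(E1 \<union> E2) \<inter> E3 \<noteq> {}"
    then obtain e where e: "e \<in> E1 \<union> E2" "e \<in> E3" by blast
    then obtain r where r: "r \<in> R" "e = {0, r}" using E3m by blast
    have rr: "s \<le> r" "r \<notin> w ` P2" using Rr[OF r(1)] by auto
    show False
    proof (cases "e \<in> E1")
      case True
      then obtain p a where pa: "p \<in> P2" "a \<in> p" "e = {a, w p}" using E1m by blast
      have "a < s" using pS pa by auto
      then have "r = w p" using pa(3) r(2) rr by (auto simp: doubleton_eq_iff)
      then show False using rr pa(1) by auto
    next
      case False
      then obtain i where "2*i+1 < s" "e = {2*i, 2*i+1}" using e E2m by blast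
      then show False using r rr by (auto simp: doubleton_eq_iff)
    qed
  qed
  have finp: "\<forall>a\<in>P2. finite a" using pcard by (metis card.infinite zero_neq_numeral)
  have fE: "finite E1" "finite E2" "finite E3" unfolding E1_def E2_def E3_def
    using fP2 fR finp by auto
  have "card G = card E1 + card E2 + card E3" unfolding G_def
    using fE d12 d3 by (simp add: card_Un_disjoint)
  also have "\<dots> = n + (s choose 2) - (s+1) div 2" using cE1 cE2 cE3 cR n by simp
  finally have cG: "card G = n + (s choose 2) - (s+1) div 2" .
  show ?thesis using isg nK nM cG by blast
qed



lemma ceil_half: "\<lceil>real s / 2\<rceil> = int ((s+1) div 2)"
proof (rule ceiling_unique)
  show "real_of_int (int ((s + 1) div 2)) - 1 < real s / 2"
  proof (cases "even s")
    case True then obtain k where "s = 2*k" by blast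
    then show ?thesis by simp
  next
    case False then obtain k where "s = 2*k+1" using oddE by blast
    then show ?thesis by simp
  qed
  show "real s / 2 \<le> real_of_int (int ((s + 1) div 2))"
  proof (cases "even s")
    case True then obtain k where "s = 2*k" by blast
    then show ?thesis by simp
  next
    case False then obtain k where "s = 2*k+1" using oddE by blast
    then show ?thesis by simp
  qed
qed

theorem theorem1p3:
  fixes s n :: nat
  assumes "s \<ge> 12" and "n \<ge> (s choose 2) + s + 1"
  shows "int (ex n {K22, matching_graph (s+1)})
           = int n + int (s choose 2) - \<lceil>real s / 2\<rceil>"
proof -
  define B where "B = n + (s choose 2) - (s+1) div 2"
  define A where "A = {card G | G. is_graph n G \<and> (\<forall>H\<in>{K22, matching_graph (s+1)}. \<not> subgraph_of H G)}"
  have fin: "finite A"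
  proof -
    have "A \<subseteq> card ` Pow (Pow {..<n})" unfolding A_def is_graph_def by auto
    then show ?thesis by (rule finite_subset) simp
  qed
  have up: "a \<le> B" if aA: "a \<in> A" for a
  proof -
    obtain G where G: "a = card G" "is_graph n G" "\<not> subgraph_of K22 G" "\<not> subgraph_of (matching_graph (s+1)) G"
      using aA unfolding A_def by blast
    have go: "graph_on {..<n} G" by (rule is_graph_on[OF G(2)])
    have c4: "c4free G" by (rule c4_of_K22[OF G(2) G(3)])
    have mb: "card M \<le> s" if "M \<subseteq> G" "matching M" for M by (rule match_bound_of[OF G(2) G(4) that])
    have "int (card G) \<le> int (card {..<n}) + fI s" by (rule upper_bound[OF go c4 mb assms(1)])
    then have "int (card G) \<le> int n + int (s choose 2) - int ((s+1) div 2)" unfolding fI_def by simp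
    moreover have "(s+1) div 2 \<le> n" using assms by linarith
    ultimately show ?thesis unfolding B_def G(1) by linarith
  qed
  have inA: "B \<in> A"
  proof -
    have "1 \<le> s" "s + (s choose 2) \<le> n" using assms by auto
    then obtain G where G: "is_graph n G" "\<not> subgraph_of K22 G" "\<not> subgraph_of (matching_graph (s+1)) G"
      "card G = n + (s choose 2) - (s+1) div 2" using construction by blast
    have "B = card G \<and> is_graph n G \<and> (\<forall>H\<in>{K22, matching_graph (s+1)}. \<not> subgraph_of H G)"
      using G unfolding B_def by simp
    then show ?thesis unfolding A_def by blast
  qed
  have "ex n {K22, matching_graph (s+1)} = B"
    unfolding ex_def A_def[symmetric] by (rule Max_eqI[OF fin up inA])
  moreover have "(s+1) div 2 \<le> n" using assms by linarith
  ultimately show ?thesis unfolding B_def ceil_half by simp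
qed


end
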